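(* Let $(\mathcal C,\otimes,I)$ be a symmetric closed monoidal category and $M$ a commutative monad on $\mathcal C$, and let $A$ be an object. Then the tuple $\langle A\Rightarrow MA,\ \Lambda(q),\ \mathsf{kcomp},\ \mathsf{kident}\rangle$, where $q=\mu_A\circ M\mathsf{app}\circ\tau: M(A\Rightarrow MA)\otimes A\to M((A\Rightarrow MA)\otimes A)\to MMA\to MA$, is a symmetric Eilenberg--Moore $M$-monoid.
   Context: Symmetry $\mathsf{sym}:X\otimes Y\to Y\otimes X$; structural isomorphisms written $\cong$. Closed: $(-)\otimes B\dashv B\Rightarrow(-)$, currying $\Lambda:\mathcal C(X\otimes B,C)\cong\mathcal C(X,B\Rightarrow C)$, counit $\mathsf{app}:(B\Rightarrow C)\otimes B\to C$. $M$ has strength $\tau_{X,Y}:MX\otimes Y\to M(X\otimes Y)$ and left strength $\tau'_{X,Y}=M\mathsf{sym}\circ\tau_{Y,X}\circ\mathsf{sym}: X\otimes MY\to M(X\otimes Y)$; commutativity means $\mu\circ M\tau\circ\tau'=\mu\circ M\tau'\circ\tau: MX\otimes MY\to M(X\otimes Y)$. Kleisli composition: $\mathsf{kcomp}=\Lambda(w):(B\Rightarrow MC)\otimes(X\Rightarrow MB)\to(X\Rightarrow MC)$ where $w=\mu_C\circ M\mathsf{app}\circ\tau'\circ(\mathrm{id}\otimes\mathsf{app})\circ\cong: ((B\Rightarrow MC)\otimes(X\Rightarrow MB))\otimes X\to (B\Rightarrow MC)\otimes((X\Rightarrow MB)\otimes X)\to(B\Rightarrow MC)\otimes MB\to M((B\Rightarrow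 MC)\otimes B)\to MMC\to MC$; $\mathsf{kident}=\Lambda(\eta_X\circ\cong): I\to(X\Rightarrow MX)$ with $\cong: I\otimes X\to X$ (here $X=B=C=A$). A symmetric Eilenberg--Moore $M$-monoid is a tuple $\langle E,a: ME\to E,m: E\otimes E\to E,u: I\to E\rangle$ with $\langle E,a\rangle$ an Eilenberg--Moore $M$-algebra, $\langle E,m,u\rangle$ a monoid, and $a\circ Mm\circ\mu_{E\otimes E}\circ M\tau'_{E,E}\circ\tau_{E,ME}=m\circ(a\otimes a): ME\otimes ME\to E$. *)

theory Defs
  imports Main
begin

text \<open>A category is represented by a type of objects (all elements of the type are objects)
and a type of morphisms with hom-sets; hom-sets are pairwise disjoint, so every morphism has a
unique domain and codomain.  Composition cmp g f means g after f.\<close>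

record ('o,'m) smcc =
  hom :: "'o \<Rightarrow> 'o \<Rightarrow> 'm set"
  cmp :: "'m \<Rightarrow> 'm \<Rightarrow> 'm"
  idn :: "'o \<Rightarrow> 'm"
  tn  :: "'o \<Rightarrow> 'o \<Rightarrow> 'o"
  tnm :: "'m \<Rightarrow> 'm \<Rightarrow> 'm"
  unI :: "'o"
  asc :: "'o \<Rightarrow> 'o \<Rightarrow> 'o \<Rightarrow> 'm"
  lu  :: "'o \<Rightarrow> 'm"
  ru  :: "'o \<Rightarrow> 'm"
  sy  :: "'o \<Rightarrow> 'o \<Rightarrow> 'm"
  ihm :: "'o \<Rightarrow> 'o \<Rightarrow> 'o"
  ev  :: "'o \<Rightarrow> 'o \<Rightarrow> 'm"          (* app : (B => C)*B -> C *)

definition category :: "('o,'m,'z) smcc_scheme \<Rightarrow> bool" where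
  "category C \<longleftrightarrow>
    (\<forall>X Y X' Y' f. f \<in> hom C X Y \<longrightarrow> f \<in> hom C X' Y' \<longrightarrow> X = X' \<and> Y = Y') \<and>
    (\<forall>X. idn C X \<in> hom C X X) \<and>
    (\<forall>X Y Z f g. f \<in> hom C X Y \<longrightarrow> g \<in> hom C Y Z \<longrightarrow> cmp C g f \<in> hom C X Z) \<and>
    (\<forall>X Y f. f \<in> hom C X Y \<longrightarrow> cmp C f (idn C X) = f \<and> cmp C (idn C Y) f = f) \<and>
    (\<forall>W X Y Z f g h. f \<in> hom C W X \<longrightarrow> g \<in> hom C X Y \<longrightarrow> h \<in> hom C Y Z \<longrightarrow>
        cmp C h (cmp C g f) = cmp C (cmp C h g) f)"

definition iso :: "('o,'m,'z) smcc_scheme \<Rightarrow> 'm \<Rightarrow> 'o \<Rightarrow> 'o \<Rightarrow> bool" where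
  "iso C f X Y \<longleftrightarrow> f \<in> hom C X Y \<and>
     (\<exists>g \<in> hom C Y X. cmp C g f = idn C X \<and> cmp C f g = idn C Y)"

definition monoidal :: "('o,'m,'z) smcc_scheme \<Rightarrow> bool" where
  "monoidal C \<longleftrightarrow> category C \<and>
    \<comment> \<open>tensor is a bifunctor\<close>
    (\<forall>X Y X' Y' f g. f \<in> hom C X Y \<longrightarrow> g \<in> hom C X' Y' \<longrightarrow>
        tnm C f g \<in> hom C (tn C X X') (tn C Y Y')) \<and>
    (\<forall>X Y. tnm C (idn C X) (idn C Y) = idn C (tn C X Y)) \<and>
    (\<forall>X Y Z X' Y' Z' f g f' g'. f \<in> hom C X Y \<longrightarrow> g \<in> hom C Y Z \<longrightarrow>
        f' \<in> hom C X' Y' \<longrightarrow> g' \<in> hom C Y' Z' \<longrightarrow>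
        tnm C (cmp C g f) (cmp C g' f') = cmp C (tnm C g g') (tnm C f f')) \<and>
    \<comment> \<open>associator and unitors: natural isomorphisms\<close>
    (\<forall>X Y Z. iso C (asc C X Y Z) (tn C (tn C X Y) Z) (tn C X (tn C Y Z))) \<and>
    (\<forall>X. iso C (lu C X) (tn C (unI C) X) X) \<and>
    (\<forall>X. iso C (ru C X) (tn C X (unI C)) X) \<and>
    (\<forall>X1 X2 X3 Y1 Y2 Y3 f1 f2 f3. f1 \<in> hom C X1 Y1 \<longrightarrow> f2 \<in> hom C X2 Y2 \<longrightarrow> f3 \<in> hom C X3 Y3 \<longrightarrow>
        cmp C (asc C Y1 Y2 Y3) (tnm C (tnm C f1 f2) f3) =
        cmp C (tnm C f1 (tnm C f2 f3)) (asc C X1 X2 X3)) \<and>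
    (\<forall>X Y f. f \<in> hom C X Y \<longrightarrow>
        cmp C (lu C Y) (tnm C (idn C (unI C)) f) = cmp C f (lu C X)) \<and>
    (\<forall>X Y f. f \<in> hom C X Y \<longrightarrow>
        cmp C (ru C Y) (tnm C f (idn C (unI C))) = cmp C f (ru C X)) \<and>
    \<comment> \<open>pentagon\<close>
    (\<forall>W X Y Z. cmp C (asc C W X (tn C Y Z)) (asc C (tn C W X) Y Z) =
        cmp C (tnm C (idn C W) (asc C X Y Z))
          (cmp C (asc C W (tn C X Y) Z) (tnm C (asc C W X Y) (idn C Z)))) \<and>
    \<comment> \<open>triangle\<close>
    (\<forall>X Y. cmp C (tnm C (idn C X) (lu C Y)) (asc C X (unI C) Y) =
        tnm C (ru C X) (idn C Y))"

definition symmetric_monoidal :: "('o,'m,'z) smcc_scheme \<Rightarrow> bool" where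
  "symmetric_monoidal C \<longleftrightarrow> monoidal C \<and>
    (\<forall>X Y. sy C X Y \<in> hom C (tn C X Y) (tn C Y X)) \<and>
    (\<forall>X Y X' Y' f g. f \<in> hom C X Y \<longrightarrow> g \<in> hom C X' Y' \<longrightarrow>
        cmp C (sy C Y Y') (tnm C f g) = cmp C (tnm C g f) (sy C X X')) \<and>
    (\<forall>X Y. cmp C (sy C Y X) (sy C X Y) = idn C (tn C X Y)) \<and>
    \<comment> \<open>hexagon\<close>
    (\<forall>X Y Z. cmp C (asc C Y Z X) (cmp C (sy C X (tn C Y Z)) (asc C X Y Z)) =
        cmp C (tnm C (idn C Y) (sy C X Z))
          (cmp C (asc C Y X Z) (tnm C (sy C X Y) (idn C Z))))"

definition closed :: "('o,'m,'z) smcc_scheme \<Rightarrow> bool" where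
  "closed C \<longleftrightarrow>
    (\<forall>B Z. ev C B Z \<in> hom C (tn C (ihm C B Z) B) Z) \<and>
    (\<forall>X B Z f. f \<in> hom C (tn C X B) Z \<longrightarrow>
        (\<exists>!g. g \<in> hom C X (ihm C B Z) \<and> cmp C (ev C B Z) (tnm C g (idn C B)) = f))"

definition symmetric_closed_monoidal :: "('o,'m,'z) smcc_scheme \<Rightarrow> bool" where
  "symmetric_closed_monoidal C \<longleftrightarrow> symmetric_monoidal C \<and> closed C"

definition curry_m :: "('o,'m,'z) smcc_scheme \<Rightarrow> 'o \<Rightarrow> 'o \<Rightarrow> 'o \<Rightarrow> 'm \<Rightarrow> 'm" where
  "curry_m C X B Z f = (THE g. g \<in> hom C X (ihm C B Z) \<and> cmp C (ev C B Z) (tnm C g (idn C B)) = f)"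

record ('o,'m) smonad =
  Mo :: "'o \<Rightarrow> 'o"
  Mm :: "'m \<Rightarrow> 'm"
  eta :: "'o \<Rightarrow> 'm"
  mu :: "'o \<Rightarrow> 'm"
  st :: "'o \<Rightarrow> 'o \<Rightarrow> 'm"

definition monad :: "('o,'m,'z) smcc_scheme \<Rightarrow> ('o,'m,'y) smonad_scheme \<Rightarrow> bool" where
  "monad C T \<longleftrightarrow>
    (\<forall>X Y f. f \<in> hom C X Y \<longrightarrow> Mm T f \<in> hom C (Mo T X) (Mo T Y)) \<and>
    (\<forall>X. Mm T (idn C X) = idn C (Mo T X)) \<and>
    (\<forall>X Y Z f g. f \<in> hom C X Y \<longrightarrow> g \<in> hom C Y Z \<longrightarrow> Mm T (cmp C g f) = cmp C (Mm T g) (Mm T f)) \<and>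
    (\<forall>X. eta T X \<in> hom C X (Mo T X)) \<and>
    (\<forall>X. mu T X \<in> hom C (Mo T (Mo T X)) (Mo T X)) \<and>
    (\<forall>X Y f. f \<in> hom C X Y \<longrightarrow> cmp C (eta T Y) f = cmp C (Mm T f) (eta T X)) \<and>
    (\<forall>X Y f. f \<in> hom C X Y \<longrightarrow> cmp C (mu T Y) (Mm T (Mm T f)) = cmp C (Mm T f) (mu T X)) \<and>
    (\<forall>X. cmp C (mu T X) (Mm T (mu T X)) = cmp C (mu T X) (mu T (Mo T X))) \<and>
    (\<forall>X. cmp C (mu T X) (eta T (Mo T X)) = idn C (Mo T X)) \<and>
    (\<forall>X. cmp C (mu T X) (Mm T (eta T X)) = idn C (Mo T X))"

definition strong_monad :: "('o,'m,'z) smcc_scheme \<Rightarrow> ('o,'m,'y) smonad_scheme \<Rightarrow> bool" where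
  "strong_monad C T \<longleftrightarrow> monad C T \<and>
    (\<forall>X Y. st T X Y \<in> hom C (tn C (Mo T X) Y) (Mo T (tn C X Y))) \<and>
    (\<forall>X Y X' Y' f g. f \<in> hom C X Y \<longrightarrow> g \<in> hom C X' Y' \<longrightarrow>
        cmp C (st T Y Y') (tnm C (Mm T f) g) = cmp C (Mm T (tnm C f g)) (st T X X')) \<and>
    (\<forall>X. cmp C (Mm T (ru C X)) (st T X (unI C)) = ru C (Mo T X)) \<and>
    (\<forall>X Y Z. cmp C (st T X (tn C Y Z)) (asc C (Mo T X) Y Z) =
        cmp C (Mm T (asc C X Y Z)) (cmp C (st T (tn C X Y) Z) (tnm C (st T X Y) (idn C Z)))) \<and>
    (\<forall>X Y. cmp C (st T X Y) (tnm C (eta T X) (idn C Y)) = eta T (tn C X Y)) \<and>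
    (\<forall>X Y. cmp C (st T X Y) (tnm C (mu T X) (idn C Y)) =
        cmp C (mu T (tn C X Y)) (cmp C (Mm T (st T X Y)) (st T (Mo T X) Y)))"

definition lst :: "('o,'m,'z) smcc_scheme \<Rightarrow> ('o,'m,'y) smonad_scheme \<Rightarrow> 'o \<Rightarrow> 'o \<Rightarrow> 'm" where
  "lst C T X Y = cmp C (Mm T (sy C Y X)) (cmp C (st T Y X) (sy C X (Mo T Y)))"

definition commutative_monad :: "('o,'m,'z) smcc_scheme \<Rightarrow> ('o,'m,'y) smonad_scheme \<Rightarrow> bool" where
  "commutative_monad C T \<longleftrightarrow> strong_monad C T \<and>
    (\<forall>X Y. cmp C (mu T (tn C X Y)) (cmp C (Mm T (st T X Y)) (lst C T (Mo T X) Y)) =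
           cmp C (mu T (tn C X Y)) (cmp C (Mm T (lst C T X Y)) (st T X (Mo T Y))))"

definition em_algebra :: "('o,'m,'z) smcc_scheme \<Rightarrow> ('o,'m,'y) smonad_scheme \<Rightarrow> 'o \<Rightarrow> 'm \<Rightarrow> bool" where
  "em_algebra C T E a \<longleftrightarrow> a \<in> hom C (Mo T E) E \<and>
     cmp C a (eta T E) = idn C E \<and>
     cmp C a (Mm T a) = cmp C a (mu T E)"

definition monoid_obj :: "('o,'m,'z) smcc_scheme \<Rightarrow> 'o \<Rightarrow> 'm \<Rightarrow> 'm \<Rightarrow> bool" where
  "monoid_obj C E m u \<longleftrightarrow> m \<in> hom C (tn C E E) E \<and> u \<in> hom C (unI C) E \<and>
     cmp C m (tnm C m (idn C E)) = cmp C m (cmp C (tnm C (idn C E) m) (asc C E E E)) \<and>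
     cmp C m (tnm C u (idn C E)) = lu C E \<and>
     cmp C m (tnm C (idn C E) u) = ru C E"

definition sym_em_monoid ::
  "('o,'m,'z) smcc_scheme \<Rightarrow> ('o,'m,'y) smonad_scheme \<Rightarrow> 'o \<Rightarrow> 'm \<Rightarrow> 'm \<Rightarrow> 'm \<Rightarrow> bool" where
  "sym_em_monoid C T E a m u \<longleftrightarrow> em_algebra C T E a \<and> monoid_obj C E m u \<and>
     cmp C a (cmp C (Mm T m) (cmp C (mu T (tn C E E)) (cmp C (Mm T (lst C T E E)) (st T E (Mo T E))))) =
     cmp C m (tnm C a a)"

definition kcomp :: "('o,'m,'z) smcc_scheme \<Rightarrow> ('o,'m,'y) smonad_scheme \<Rightarrow> 'o \<Rightarrow> 'm" where
  "kcomp C T A = (let H = ihm C A (Mo T A) in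
     curry_m C (tn C H H) A (Mo T A)
       (cmp C (mu T A) (cmp C (Mm T (ev C A (Mo T A))) (cmp C (lst C T H A)
          (cmp C (tnm C (idn C H) (ev C A (Mo T A))) (asc C H H A))))))"

definition kident :: "('o,'m,'z) smcc_scheme \<Rightarrow> ('o,'m,'y) smonad_scheme \<Rightarrow> 'o \<Rightarrow> 'm" where
  "kident C T A = curry_m C (unI C) A (Mo T A) (cmp C (eta T A) (lu C A))"

definition qmap :: "('o,'m,'z) smcc_scheme \<Rightarrow> ('o,'m,'y) smonad_scheme \<Rightarrow> 'o \<Rightarrow> 'm" where
  "qmap C T A = (let H = ihm C A (Mo T A) in
     cmp C (mu T A) (cmp C (Mm T (ev C A (Mo T A))) (st T H A)))"

end

theory Submission
  imports Defs
begin


locale SCM =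
  fixes C :: "('o,'m) smcc" and T :: "('o,'m) smonad"
  assumes scm: "symmetric_closed_monoidal C" and cmm: "commutative_monad C T"
begin

abbreviation cp (infixr "\<cdot>" 55) where "g \<cdot> f \<equiv> cmp C g f"
abbreviation tm (infix "\<otimes>" 60) where "f \<otimes> g \<equiv> tnm C f g"
abbreviation to (infix "\<odot>" 60) where "X \<odot> Y \<equiv> tn C X Y"
abbreviation "idm \<equiv> idn C"
abbreviation "MM \<equiv> Mm T"
abbreviation "MO \<equiv> Mo T"
abbreviation "\<eta> \<equiv> eta T"
abbreviation "\<mu> \<equiv> mu T"
abbreviation "\<tau> \<equiv> st T"
abbreviation "\<tau>' \<equiv> lst C T"
abbreviation "\<alpha> \<equiv> asc C"
abbreviation "\<sigma> \<equiv> sy C"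
abbreviation "ll \<equiv> lu C"
abbreviation "rr \<equiv> ru C"
abbreviation "II \<equiv> unI C"

definition ar where "ar f \<longleftrightarrow> (\<exists>X Y. f \<in> hom C X Y)"
definition dm where "dm f = (THE X. \<exists>Y. f \<in> hom C X Y)"
definition cd where "cd f = (THE Y. \<exists>X. f \<in> hom C X Y)"

lemma cat: "category C" using scm unfolding symmetric_closed_monoidal_def symmetric_monoidal_def monoidal_def by simp
lemma mon: "monoidal C" using scm unfolding symmetric_closed_monoidal_def symmetric_monoidal_def by simp
lemma sym: "symmetric_monoidal C" using scm unfolding symmetric_closed_monoidal_def by simp
lemma clo: "closed C" using scm unfolding symmetric_closed_monoidal_def by simp
lemma smon: "strong_monad C T" using cmm unfolding commutative_monad_def by simp
lemma mnd: "monad C T" using smon unfolding strong_monad_def by simp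

lemmas cat_ax = cat[unfolded category_def]
lemma hom_uniq: "f \<in> hom C X Y \<Longrightarrow> f \<in> hom C X' Y' \<Longrightarrow> X = X' \<and> Y = Y'"
  using cat_ax[THEN conjunct1] by blast

lemma hom_iff: "f \<in> hom C X Y \<longleftrightarrow> ar f \<and> dm f = X \<and> cd f = Y"
proof
  assume h: "f \<in> hom C X Y"
  have "dm f = X" unfolding dm_def using h hom_uniq by (intro the_equality) blast+
  moreover have "cd f = Y" unfolding cd_def using h hom_uniq by (intro the_equality) blast+
  ultimately show "ar f \<and> dm f = X \<and> cd f = Y" using h ar_def by blast
next
  assume h: "ar f \<and> dm f = X \<and> cd f = Y"
  then obtain X' Y' where h': "f \<in> hom C X' Y'" using ar_def by blast
  have "dm f = X'" unfolding dm_def using h' hom_uniq by (intro the_equality) blast+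
  moreover have "cd f = Y'" unfolding cd_def using h' hom_uniq by (intro the_equality) blast+
  ultimately show "f \<in> hom C X Y" using h h' by simp
qed

lemma homE: "f \<in> hom C X Y \<Longrightarrow> ar f" "f \<in> hom C X Y \<Longrightarrow> dm f = X" "f \<in> hom C X Y \<Longrightarrow> cd f = Y"
  using hom_iff by auto

lemma idn_hom: "idm X \<in> hom C X X" using cat_ax[THEN conjunct2, THEN conjunct1] by blast
lemma ar_idn[simp]: "ar (idm X)" and dm_idn[simp]: "dm (idm X) = X" and cd_idn[simp]: "cd (idm X) = X"
  using idn_hom homE by blast+

lemma comp_hom: "f \<in> hom C X Y \<Longrightarrow> g \<in> hom C Y Z \<Longrightarrow> g \<cdot> f \<in> hom C X Z"
  using cat_ax[THEN conjunct2, THEN conjunct2, THEN conjunct1] by blast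

lemma ar_comp[simp]: "ar f \<Longrightarrow> ar g \<Longrightarrow> dm g = cd f \<Longrightarrow> ar (g \<cdot> f)"
  and dm_comp[simp]: "ar f \<Longrightarrow> ar g \<Longrightarrow> dm g = cd f \<Longrightarrow> dm (g \<cdot> f) = dm f"
  and cd_comp[simp]: "ar f \<Longrightarrow> ar g \<Longrightarrow> dm g = cd f \<Longrightarrow> cd (g \<cdot> f) = cd g"
  using comp_hom[of f "dm f" "cd f" g "cd g"] hom_iff by auto

lemma comp_assoc[simp]: "ar f \<Longrightarrow> ar g \<Longrightarrow> ar h \<Longrightarrow> dm g = cd f \<Longrightarrow> dm h = cd g \<Longrightarrow>
   (h \<cdot> g) \<cdot> f = h \<cdot> (g \<cdot> f)"
proof -
  assume a: "ar f" "ar g" "ar h" "dm g = cd f" "dm h = cd g"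
  have "f \<in> hom C (dm f) (cd f)" "g \<in> hom C (cd f) (cd g)" "h \<in> hom C (cd g) (cd h)"
    using a hom_iff by auto
  then show ?thesis using cat_ax[THEN conjunct2, THEN conjunct2, THEN conjunct2, THEN conjunct2] by metis
qed

lemma idl[simp]: "ar f \<Longrightarrow> cd f = X \<Longrightarrow> idm X \<cdot> f = f"
proof -
  assume a: "ar f" "cd f = X"
  have "f \<in> hom C (dm f) X" using a hom_iff by auto
  then show ?thesis using cat_ax[THEN conjunct2, THEN conjunct2, THEN conjunct2, THEN conjunct1] by blast
qed
lemma idr[simp]: "ar f \<Longrightarrow> dm f = X \<Longrightarrow> f \<cdot> idm X = f"
proof -
  assume a: "ar f" "dm f = X"
  have "f \<in> hom C X (cd f)" using a hom_iff by auto
  then show ?thesis using cat_ax[THEN conjunct2, THEN conjunct2, THEN conjunct2, THEN conjunct1] by blast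
qed

lemma tnm_hom: "f \<in> hom C X Y \<Longrightarrow> g \<in> hom C X' Y' \<Longrightarrow> f \<otimes> g \<in> hom C (X \<odot> X') (Y \<odot> Y')"
  using mon[unfolded monoidal_def, THEN conjunct2, THEN conjunct1] by blast
lemma ar_tnm[simp]: "ar f \<Longrightarrow> ar g \<Longrightarrow> ar (f \<otimes> g)"
  and dm_tnm[simp]: "ar f \<Longrightarrow> ar g \<Longrightarrow> dm (f \<otimes> g) = dm f \<odot> dm g"
  and cd_tnm[simp]: "ar f \<Longrightarrow> ar g \<Longrightarrow> cd (f \<otimes> g) = cd f \<odot> cd g"
  using tnm_hom[of f "dm f" "cd f" g "dm g" "cd g"] hom_iff by auto

lemmas mon_ax = mon[unfolded monoidal_def]
lemmas sym_ax = sym[unfolded symmetric_monoidal_def]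
lemmas clo_ax = clo[unfolded closed_def]
lemmas mnd_ax = mnd[unfolded monad_def]
lemmas smon_ax = smon[unfolded strong_monad_def]
lemmas cmm_ax = cmm[unfolded commutative_monad_def]

lemma tn_id[simp]: "idm X \<otimes> idm Y = idm (X \<odot> Y)" using mon_ax[THEN conjunct2, THEN conjunct2, THEN conjunct1] by blast

lemma interchange: "ar f \<Longrightarrow> ar g \<Longrightarrow> dm g = cd f \<Longrightarrow> ar f' \<Longrightarrow> ar g' \<Longrightarrow> dm g' = cd f' \<Longrightarrow>
  (g \<cdot> f) \<otimes> (g' \<cdot> f') = (g \<otimes> g') \<cdot> (f \<otimes> f')"
  by (rule mon_ax[THEN conjunct2, THEN conjunct2, THEN conjunct2, THEN conjunct1, rule_format]) (simp_all add: hom_iff)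

lemma iso_asc: "iso C (\<alpha> X Y Z) ((X \<odot> Y) \<odot> Z) (X \<odot> (Y \<odot> Z))" using mon_ax[THEN conjunct2, THEN conjunct2, THEN conjunct2, THEN conjunct2, THEN conjunct1] by blast
lemma iso_lu: "iso C (ll X) (II \<odot> X) X" using mon_ax[THEN conjunct2, THEN conjunct2, THEN conjunct2, THEN conjunct2, THEN conjunct2, THEN conjunct1] by blast
lemma iso_ru: "iso C (rr X) (X \<odot> II) X" using mon_ax[THEN conjunct2, THEN conjunct2, THEN conjunct2, THEN conjunct2, THEN conjunct2, THEN conjunct2, THEN conjunct1] by blast

lemma asc_nat: "ar f1 \<Longrightarrow> ar f2 \<Longrightarrow> ar f3 \<Longrightarrow> dm f1 = X1 \<Longrightarrow> dm f2 = X2 \<Longrightarrow> dm f3 = X3 \<Longrightarrow>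
   cd f1 = Y1 \<Longrightarrow> cd f2 = Y2 \<Longrightarrow> cd f3 = Y3 \<Longrightarrow>
   \<alpha> Y1 Y2 Y3 \<cdot> ((f1 \<otimes> f2) \<otimes> f3) = (f1 \<otimes> (f2 \<otimes> f3)) \<cdot> \<alpha> X1 X2 X3"
  by (rule mon_ax[THEN conjunct2, THEN conjunct2, THEN conjunct2, THEN conjunct2, THEN conjunct2, THEN conjunct2, THEN conjunct2, THEN conjunct1, rule_format]) (simp_all add: hom_iff)
lemma lu_nat: "ar f \<Longrightarrow> dm f = X \<Longrightarrow> cd f = Y \<Longrightarrow> ll Y \<cdot> (idm II \<otimes> f) = f \<cdot> ll X"
  by (rule mon_ax[THEN conjunct2, THEN conjunct2, THEN conjunct2, THEN conjunct2, THEN conjunct2, THEN conjunct2, THEN conjunct2, THEN conjunct2, THEN conjunct1, rule_format]) (simp_all add: hom_iff)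
lemma ru_nat: "ar f \<Longrightarrow> dm f = X \<Longrightarrow> cd f = Y \<Longrightarrow> rr Y \<cdot> (f \<otimes> idm II) = f \<cdot> rr X"
  by (rule mon_ax[THEN conjunct2, THEN conjunct2, THEN conjunct2, THEN conjunct2, THEN conjunct2, THEN conjunct2, THEN conjunct2, THEN conjunct2, THEN conjunct2, THEN conjunct1, rule_format]) (simp_all add: hom_iff)
lemma pentagon: "\<alpha> W X (Y \<odot> Z) \<cdot> \<alpha> (W \<odot> X) Y Z =
        (idm W \<otimes> \<alpha> X Y Z) \<cdot> (\<alpha> W (X \<odot> Y) Z \<cdot> (\<alpha> W X Y \<otimes> idm Z))" using mon_ax[THEN conjunct2, THEN conjunct2, THEN conjunct2, THEN conjunct2, THEN conjunct2, THEN conjunct2, THEN conjunct2, THEN conjunct2, THEN conjunct2, THEN conjunct2, THEN conjunct1] by blast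
lemma triangle: "(idm X \<otimes> ll Y) \<cdot> \<alpha> X II Y = rr X \<otimes> idm Y" using mon_ax[THEN conjunct2, THEN conjunct2, THEN conjunct2, THEN conjunct2, THEN conjunct2, THEN conjunct2, THEN conjunct2, THEN conjunct2, THEN conjunct2, THEN conjunct2, THEN conjunct2] by blast

lemma sy_hom: "\<sigma> X Y \<in> hom C (X \<odot> Y) (Y \<odot> X)" using sym_ax[THEN conjunct2, THEN conjunct1] by blast
lemma sy_nat: "ar f \<Longrightarrow> ar g \<Longrightarrow> dm f = X \<Longrightarrow> dm g = X' \<Longrightarrow> cd f = Y \<Longrightarrow> cd g = Y' \<Longrightarrow>
   \<sigma> Y Y' \<cdot> (f \<otimes> g) = (g \<otimes> f) \<cdot> \<sigma> X X'"
  by (rule sym_ax[THEN conjunct2, THEN conjunct2, THEN conjunct1, rule_format]) (simp_all add: hom_iff)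
lemma sy_inv: "\<sigma> Y X \<cdot> \<sigma> X Y = idm (X \<odot> Y)" using sym_ax[THEN conjunct2, THEN conjunct2, THEN conjunct2, THEN conjunct1] by blast
lemma hexagon: "\<alpha> Y Z X \<cdot> (\<sigma> X (Y \<odot> Z) \<cdot> \<alpha> X Y Z) =
        (idm Y \<otimes> \<sigma> X Z) \<cdot> (\<alpha> Y X Z \<cdot> (\<sigma> X Y \<otimes> idm Z))" using sym_ax[THEN conjunct2, THEN conjunct2, THEN conjunct2, THEN conjunct2] by blast

lemma ev_hom: "ev C B Z \<in> hom C (ihm C B Z \<odot> B) Z" using clo_ax[THEN conjunct1] by blast
lemma curry_ex: "f \<in> hom C (X \<odot> B) Z \<Longrightarrow>
        (\<exists>!g. g \<in> hom C X (ihm C B Z) \<and> ev C B Z \<cdot> (g \<otimes> idm B) = f)" using clo_ax[THEN conjunct2] by blast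

lemma M_hom: "f \<in> hom C X Y \<Longrightarrow> MM f \<in> hom C (MO X) (MO Y)" using mnd_ax[THEN conjunct1] by blast
lemma M_id[simp]: "MM (idm X) = idm (MO X)" using mnd_ax[THEN conjunct2, THEN conjunct1] by blast
lemma M_comp[simp]: "ar f \<Longrightarrow> ar g \<Longrightarrow> dm g = cd f \<Longrightarrow> MM (g \<cdot> f) = MM g \<cdot> MM f"
  by (rule mnd_ax[THEN conjunct2, THEN conjunct2, THEN conjunct1, rule_format]) (simp_all add: hom_iff)
lemma eta_hom: "\<eta> X \<in> hom C X (MO X)" using mnd_ax[THEN conjunct2, THEN conjunct2, THEN conjunct2, THEN conjunct1] by blast
lemma mu_hom: "\<mu> X \<in> hom C (MO (MO X)) (MO X)" using mnd_ax[THEN conjunct2, THEN conjunct2, THEN conjunct2, THEN conjunct2, THEN conjunct1] by blast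
lemma eta_nat: "ar f \<Longrightarrow> dm f = X \<Longrightarrow> cd f = Y \<Longrightarrow> \<eta> Y \<cdot> f = MM f \<cdot> \<eta> X"
  by (rule mnd_ax[THEN conjunct2, THEN conjunct2, THEN conjunct2, THEN conjunct2, THEN conjunct2, THEN conjunct1, rule_format]) (simp_all add: hom_iff)
lemma mu_nat: "ar f \<Longrightarrow> dm f = X \<Longrightarrow> cd f = Y \<Longrightarrow> \<mu> Y \<cdot> MM (MM f) = MM f \<cdot> \<mu> X"
  by (rule mnd_ax[THEN conjunct2, THEN conjunct2, THEN conjunct2, THEN conjunct2, THEN conjunct2, THEN conjunct2, THEN conjunct1, rule_format]) (simp_all add: hom_iff)
lemma mu_assoc: "\<mu> X \<cdot> MM (\<mu> X) = \<mu> X \<cdot> \<mu> (MO X)" using mnd_ax[THEN conjunct2, THEN conjunct2, THEN conjunct2, THEN conjunct2, THEN conjunct2, THEN conjunct2, THEN conjunct2, THEN conjunct1] by blast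
lemma mu_eta1[simp]: "\<mu> X \<cdot> \<eta> (MO X) = idm (MO X)" using mnd_ax[THEN conjunct2, THEN conjunct2, THEN conjunct2, THEN conjunct2, THEN conjunct2, THEN conjunct2, THEN conjunct2, THEN conjunct2, THEN conjunct1] by blast
lemma mu_eta2[simp]: "\<mu> X \<cdot> MM (\<eta> X) = idm (MO X)" using mnd_ax[THEN conjunct2, THEN conjunct2, THEN conjunct2, THEN conjunct2, THEN conjunct2, THEN conjunct2, THEN conjunct2, THEN conjunct2, THEN conjunct2] by blast

lemma st_hom: "\<tau> X Y \<in> hom C (MO X \<odot> Y) (MO (X \<odot> Y))" using smon_ax[THEN conjunct2, THEN conjunct1] by blast
lemma st_nat: "ar f \<Longrightarrow> ar g \<Longrightarrow> dm f = X \<Longrightarrow> dm g = X' \<Longrightarrow> cd f = Y \<Longrightarrow> cd g = Y' \<Longrightarrow>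
   \<tau> Y Y' \<cdot> (MM f \<otimes> g) = MM (f \<otimes> g) \<cdot> \<tau> X X'"
  by (rule smon_ax[THEN conjunct2, THEN conjunct2, THEN conjunct1, rule_format]) (simp_all add: hom_iff)
lemma st_ru: "MM (rr X) \<cdot> \<tau> X II = rr (MO X)" using smon_ax[THEN conjunct2, THEN conjunct2, THEN conjunct2, THEN conjunct1] by blast
lemma st_assoc: "\<tau> X (Y \<odot> Z) \<cdot> \<alpha> (MO X) Y Z =
        MM (\<alpha> X Y Z) \<cdot> (\<tau> (X \<odot> Y) Z \<cdot> (\<tau> X Y \<otimes> idm Z))" using smon_ax[THEN conjunct2, THEN conjunct2, THEN conjunct2, THEN conjunct2, THEN conjunct1] by blast
lemma st_eta: "\<tau> X Y \<cdot> (\<eta> X \<otimes> idm Y) = \<eta> (X \<odot> Y)" using smon_ax[THEN conjunct2, THEN conjunct2, THEN conjunct2, THEN conjunct2, THEN conjunct2, THEN conjunct1] by blast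
lemma st_mu: "\<tau> X Y \<cdot> (\<mu> X \<otimes> idm Y) = \<mu> (X \<odot> Y) \<cdot> (MM (\<tau> X Y) \<cdot> \<tau> (MO X) Y)" using smon_ax[THEN conjunct2, THEN conjunct2, THEN conjunct2, THEN conjunct2, THEN conjunct2, THEN conjunct2] by blast
lemma comm: "\<mu> (X \<odot> Y) \<cdot> (MM (\<tau> X Y) \<cdot> \<tau>' (MO X) Y) = \<mu> (X \<odot> Y) \<cdot> (MM (\<tau>' X Y) \<cdot> \<tau> X (MO Y))"
  using cmm_ax[THEN conjunct2] by blast

lemma asc_hom: "\<alpha> X Y Z \<in> hom C ((X \<odot> Y) \<odot> Z) (X \<odot> (Y \<odot> Z))" using iso_asc unfolding iso_def by blast
lemma lu_hom: "ll X \<in> hom C (II \<odot> X) X" using iso_lu unfolding iso_def by blast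
lemma ru_hom: "rr X \<in> hom C (X \<odot> II) X" using iso_ru unfolding iso_def by blast
lemma lst_hom: "\<tau>' X Y \<in> hom C (X \<odot> MO Y) (MO (X \<odot> Y))"
  unfolding lst_def by (rule comp_hom[OF comp_hom[OF sy_hom st_hom] M_hom[OF sy_hom]])

lemma ar_asc[simp]: "ar (\<alpha> X Y Z)" and dm_asc[simp]: "dm (\<alpha> X Y Z) = (X \<odot> Y) \<odot> Z"
  and cd_asc[simp]: "cd (\<alpha> X Y Z) = X \<odot> (Y \<odot> Z)" using asc_hom by (simp_all add: hom_iff)
lemma ar_lu[simp]: "ar (ll X)" and dm_lu[simp]: "dm (ll X) = II \<odot> X"
  and cd_lu[simp]: "cd (ll X) = X" using lu_hom by (simp_all add: hom_iff)
lemma ar_ru[simp]: "ar (rr X)" and dm_ru[simp]: "dm (rr X) = X \<odot> II"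
  and cd_ru[simp]: "cd (rr X) = X" using ru_hom by (simp_all add: hom_iff)
lemma ar_sy[simp]: "ar (\<sigma> X Y)" and dm_sy[simp]: "dm (\<sigma> X Y) = X \<odot> Y"
  and cd_sy[simp]: "cd (\<sigma> X Y) = Y \<odot> X" using sy_hom by (simp_all add: hom_iff)
lemma ar_ev[simp]: "ar (ev C B Z)" and dm_ev[simp]: "dm (ev C B Z) = ihm C B Z \<odot> B"
  and cd_ev[simp]: "cd (ev C B Z) = Z" using ev_hom by (simp_all add: hom_iff)
lemma ar_eta[simp]: "ar (\<eta> X)" and dm_eta[simp]: "dm (\<eta> X) = X"
  and cd_eta[simp]: "cd (\<eta> X) = MO X" using eta_hom by (simp_all add: hom_iff)
lemma ar_mu[simp]: "ar (\<mu> X)" and dm_mu[simp]: "dm (\<mu> X) = MO (MO X)"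
  and cd_mu[simp]: "cd (\<mu> X) = MO X" using mu_hom by (simp_all add: hom_iff)
lemma ar_st[simp]: "ar (\<tau> X Y)" and dm_st[simp]: "dm (\<tau> X Y) = MO X \<odot> Y"
  and cd_st[simp]: "cd (\<tau> X Y) = MO (X \<odot> Y)" using st_hom by (simp_all add: hom_iff)
lemma ar_lst[simp]: "ar (\<tau>' X Y)" and dm_lst[simp]: "dm (\<tau>' X Y) = X \<odot> MO Y"
  and cd_lst[simp]: "cd (\<tau>' X Y) = MO (X \<odot> Y)" using lst_hom by (simp_all add: hom_iff)
lemma ar_M[simp]: "ar f \<Longrightarrow> ar (MM f)" and dm_M[simp]: "ar f \<Longrightarrow> dm (MM f) = MO (dm f)"
  and cd_M[simp]: "ar f \<Longrightarrow> cd (MM f) = MO (cd f)" using M_hom[of f "dm f" "cd f"] hom_iff by auto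

lemma curry_prop: "ar f \<Longrightarrow> dm f = X \<odot> B \<Longrightarrow> cd f = Z \<Longrightarrow>
   curry_m C X B Z f \<in> hom C X (ihm C B Z) \<and> ev C B Z \<cdot> (curry_m C X B Z f \<otimes> idm B) = f"
proof -
  assume a: "ar f" "dm f = X \<odot> B" "cd f = Z"
  then have "f \<in> hom C (X \<odot> B) Z" using hom_iff by blast
  from curry_ex[OF this] show ?thesis unfolding curry_m_def by (rule theI')
qed
lemma ar_curry[simp]: "ar f \<Longrightarrow> dm f = X \<odot> B \<Longrightarrow> cd f = Z \<Longrightarrow> ar (curry_m C X B Z f)"
  and dm_curry[simp]: "ar f \<Longrightarrow> dm f = X \<odot> B \<Longrightarrow> cd f = Z \<Longrightarrow> dm (curry_m C X B Z f) = X"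
  and cd_curry[simp]: "ar f \<Longrightarrow> dm f = X \<odot> B \<Longrightarrow> cd f = Z \<Longrightarrow> cd (curry_m C X B Z f) = ihm C B Z"
  using curry_prop by (simp_all add: hom_iff)
lemma curry_ev[simp]: "ar f \<Longrightarrow> dm f = X \<odot> B \<Longrightarrow> cd f = Z \<Longrightarrow> ev C B Z \<cdot> (curry_m C X B Z f \<otimes> idm B) = f"
  using curry_prop by blast
lemma curry_uniq: "ar g \<Longrightarrow> dm g = X \<Longrightarrow> cd g = ihm C B Z \<Longrightarrow> ar g' \<Longrightarrow> dm g' = X \<Longrightarrow> cd g' = ihm C B Z \<Longrightarrow>
   ev C B Z \<cdot> (g \<otimes> idm B) = ev C B Z \<cdot> (g' \<otimes> idm B) \<Longrightarrow> g = g'"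
proof -
  assume a: "ar g" "dm g = X" "cd g = ihm C B Z" "ar g'" "dm g' = X" "cd g' = ihm C B Z"
    and e: "ev C B Z \<cdot> (g \<otimes> idm B) = ev C B Z \<cdot> (g' \<otimes> idm B)"
  have h: "g \<in> hom C X (ihm C B Z)" "g' \<in> hom C X (ihm C B Z)" using a by (simp_all add: hom_iff)
  have P: "ev C B Z \<cdot> (g \<otimes> idm B) \<in> hom C (X \<odot> B) Z"
    by (rule comp_hom[OF tnm_hom[OF h(1) idn_hom] ev_hom])
  note ex = curry_ex[OF P]
  have 1: "(THE k. k \<in> hom C X (ihm C B Z) \<and> ev C B Z \<cdot> (k \<otimes> idm B) = ev C B Z \<cdot> (g \<otimes> idm B)) = g"
    using h(1) by (intro the1_equality[OF ex]) simp
  have 2: "(THE k. k \<in> hom C X (ihm C B Z) \<and> ev C B Z \<cdot> (k \<otimes> idm B) = ev C B Z \<cdot> (g \<otimes> idm B)) = g'"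
    using h(2) e by (intro the1_equality[OF ex]) simp
  from 1 2 show ?thesis by simp
qed

lemma iso_hom: "iso C i X Y \<Longrightarrow> i \<in> hom C X Y" by (simp add: iso_def)
definition ivs where "ivs i X Y = (SOME g. g \<in> hom C Y X \<and> g \<cdot> i = idm X \<and> i \<cdot> g = idm Y)"
lemma ivs_prop: "iso C i X Y \<Longrightarrow> ivs i X Y \<in> hom C Y X \<and> ivs i X Y \<cdot> i = idm X \<and> i \<cdot> ivs i X Y = idm Y"
  unfolding iso_def ivs_def by (rule someI_ex) blast

lemma iso_cancel_r: "iso C i X Y \<Longrightarrow> ar f \<Longrightarrow> ar g \<Longrightarrow> dm f = Y \<Longrightarrow> dm g = Y \<Longrightarrow> f \<cdot> i = g \<cdot> i \<Longrightarrow> f = g"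
proof -
  assume i: "iso C i X Y" and a: "ar f" "ar g" "dm f = Y" "dm g = Y" and e: "f \<cdot> i = g \<cdot> i"
  note p = ivs_prop[OF i]
  have hi: "ar i" "dm i = X" "cd i = Y" "ar (ivs i X Y)" "dm (ivs i X Y) = Y" "cd (ivs i X Y) = X"
    using iso_hom[OF i] p by (simp_all add: hom_iff)
  have "f = f \<cdot> (i \<cdot> ivs i X Y)" using p a by simp
  also have "\<dots> = (f \<cdot> i) \<cdot> ivs i X Y" using hi a by simp
  also have "\<dots> = (g \<cdot> i) \<cdot> ivs i X Y" using e by simp
  also have "\<dots> = g \<cdot> (i \<cdot> ivs i X Y)" using hi a by simp
  also have "\<dots> = g" using p a by simp
  finally show ?thesis .
qed
lemma iso_cancel_l: "iso C i X Y \<Longrightarrow> ar f \<Longrightarrow> ar g \<Longrightarrow> cd f = X \<Longrightarrow> cd g = X \<Longrightarrow> i \<cdot> f = i \<cdot> g \<Longrightarrow> f = g"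
proof -
  assume i: "iso C i X Y" and a: "ar f" "ar g" "cd f = X" "cd g = X" and e: "i \<cdot> f = i \<cdot> g"
  note p = ivs_prop[OF i]
  have hi: "ar i" "dm i = X" "cd i = Y" "ar (ivs i X Y)" "dm (ivs i X Y) = Y" "cd (ivs i X Y) = X"
    using iso_hom[OF i] p by (simp_all add: hom_iff)
  have "f = (ivs i X Y \<cdot> i) \<cdot> f" using p a by simp
  also have "\<dots> = ivs i X Y \<cdot> (i \<cdot> f)" using hi a by simp
  also have "\<dots> = ivs i X Y \<cdot> (i \<cdot> g)" using e by simp
  also have "\<dots> = (ivs i X Y \<cdot> i) \<cdot> g" using hi a by simp
  also have "\<dots> = g" using p a by simp
  finally show ?thesis .
qed

lemma iso_sy: "iso C (\<sigma> X Y) (X \<odot> Y) (Y \<odot> X)"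
  unfolding iso_def using sy_hom sy_inv by blast
lemma iso_tnm: "iso C i X Y \<Longrightarrow> iso C j X' Y' \<Longrightarrow> iso C (i \<otimes> j) (X \<odot> X') (Y \<odot> Y')"
proof -
  assume i: "iso C i X Y" and j: "iso C j X' Y'"
  note p = ivs_prop[OF i] and q = ivs_prop[OF j]
  have h: "ar i" "dm i = X" "cd i = Y" "ar (ivs i X Y)" "dm (ivs i X Y) = Y" "cd (ivs i X Y) = X"
    "ar j" "dm j = X'" "cd j = Y'" "ar (ivs j X' Y')" "dm (ivs j X' Y') = Y'" "cd (ivs j X' Y') = X'"
    using iso_hom[OF i] iso_hom[OF j] p q by (simp_all add: hom_iff)
  have "(ivs i X Y \<otimes> ivs j X' Y') \<cdot> (i \<otimes> j) = idm (X \<odot> X')"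
    using h p q interchange[of i "ivs i X Y" j "ivs j X' Y'"] by simp
  moreover have "(i \<otimes> j) \<cdot> (ivs i X Y \<otimes> ivs j X' Y') = idm (Y \<odot> Y')"
    using h p q interchange[of "ivs i X Y" i "ivs j X' Y'" j] by simp
  moreover have "ivs i X Y \<otimes> ivs j X' Y' \<in> hom C (Y \<odot> Y') (X \<odot> X')" using h hom_iff by simp
  moreover have "i \<otimes> j \<in> hom C (X \<odot> X') (Y \<odot> Y')" using h hom_iff by simp
  ultimately show ?thesis unfolding iso_def by blast
qed
lemma iso_comp: "iso C i X Y \<Longrightarrow> iso C j Y Z \<Longrightarrow> iso C (j \<cdot> i) X Z"
proof -
  assume i: "iso C i X Y" and j: "iso C j Y Z"
  note p = ivs_prop[OF i] and q = ivs_prop[OF j]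
  have h: "ar i" "dm i = X" "cd i = Y" "ar (ivs i X Y)" "dm (ivs i X Y) = Y" "cd (ivs i X Y) = X"
    "ar j" "dm j = Y" "cd j = Z" "ar (ivs j Y Z)" "dm (ivs j Y Z) = Z" "cd (ivs j Y Z) = Y"
    using iso_hom[OF i] iso_hom[OF j] p q by (simp_all add: hom_iff)
  have "(ivs i X Y \<cdot> ivs j Y Z) \<cdot> (j \<cdot> i) = ivs i X Y \<cdot> ((ivs j Y Z \<cdot> j) \<cdot> i)" using h by simp
  also have "\<dots> = idm X" using h p q by simp
  finally have 1: "(ivs i X Y \<cdot> ivs j Y Z) \<cdot> (j \<cdot> i) = idm X" .
  have "(j \<cdot> i) \<cdot> (ivs i X Y \<cdot> ivs j Y Z) = j \<cdot> ((i \<cdot> ivs i X Y) \<cdot> ivs j Y Z)" using h by simp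
  also have "\<dots> = idm Z" using h p q by simp
  finally have 2: "(j \<cdot> i) \<cdot> (ivs i X Y \<cdot> ivs j Y Z) = idm Z" .
  have "ivs i X Y \<cdot> ivs j Y Z \<in> hom C Z X" "j \<cdot> i \<in> hom C X Z" using h hom_iff by simp_all
  with 1 2 show ?thesis unfolding iso_def by blast
qed
lemma iso_idn: "iso C (idm X) X X" unfolding iso_def using idn_hom by force

definition ai where "ai X Y Z = ivs (\<alpha> X Y Z) ((X \<odot> Y) \<odot> Z) (X \<odot> (Y \<odot> Z))"
lemma ai_prop: "ai X Y Z \<in> hom C (X \<odot> (Y \<odot> Z)) ((X \<odot> Y) \<odot> Z)"
   "ai X Y Z \<cdot> \<alpha> X Y Z = idm ((X \<odot> Y) \<odot> Z)" "\<alpha> X Y Z \<cdot> ai X Y Z = idm (X \<odot> (Y \<odot> Z))"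
  using ivs_prop[OF iso_asc] unfolding ai_def by blast+
lemma ar_ai[simp]: "ar (ai X Y Z)" and dm_ai[simp]: "dm (ai X Y Z) = X \<odot> (Y \<odot> Z)"
  and cd_ai[simp]: "cd (ai X Y Z) = (X \<odot> Y) \<odot> Z" using ai_prop(1) by (simp_all add: hom_iff)
lemma ai_asc[simp]: "ai X Y Z \<cdot> \<alpha> X Y Z = idm ((X \<odot> Y) \<odot> Z)" 
  and asc_ai[simp]: "\<alpha> X Y Z \<cdot> ai X Y Z = idm (X \<odot> (Y \<odot> Z))" using ai_prop by blast+

lemma ctx2: "a \<cdot> b = d \<Longrightarrow> ar a \<Longrightarrow> ar b \<Longrightarrow> dm a = cd b \<Longrightarrow> ar r \<Longrightarrow> dm b = cd r \<Longrightarrow>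
  a \<cdot> (b \<cdot> r) = d \<cdot> r"
proof -
  assume h: "a \<cdot> b = d" "ar a" "ar b" "dm a = cd b" "ar r" "dm b = cd r"
  have "a \<cdot> (b \<cdot> r) = (a \<cdot> b) \<cdot> r" using h(2-) by simp
  then show ?thesis using h(1) by (simp only:)
qed
lemma ctx3: "a \<cdot> (b \<cdot> c) = d \<Longrightarrow> ar a \<Longrightarrow> ar b \<Longrightarrow> ar c \<Longrightarrow> dm a = cd b \<Longrightarrow> dm b = cd c \<Longrightarrow> ar r \<Longrightarrow> dm c = cd r \<Longrightarrow>
  a \<cdot> (b \<cdot> (c \<cdot> r)) = d \<cdot> r"
proof -
  assume h: "a \<cdot> (b \<cdot> c) = d" "ar a" "ar b" "ar c" "dm a = cd b" "dm b = cd c" "ar r" "dm c = cd r"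
  have "a \<cdot> (b \<cdot> (c \<cdot> r)) = (a \<cdot> (b \<cdot> c)) \<cdot> r" using h(2-) by simp
  then show ?thesis using h(1) by (simp only:)
qed
lemma ctx4: "a \<cdot> (b \<cdot> (c \<cdot> e)) = d \<Longrightarrow> ar a \<Longrightarrow> ar b \<Longrightarrow> ar c \<Longrightarrow> ar e \<Longrightarrow> dm a = cd b \<Longrightarrow> dm b = cd c \<Longrightarrow>
   dm c = cd e \<Longrightarrow> ar r \<Longrightarrow> dm e = cd r \<Longrightarrow>
  a \<cdot> (b \<cdot> (c \<cdot> (e \<cdot> r))) = d \<cdot> r"
proof -
  assume h: "a \<cdot> (b \<cdot> (c \<cdot> e)) = d" "ar a" "ar b" "ar c" "ar e" "dm a = cd b" "dm b = cd c"
   "dm c = cd e" "ar r" "dm e = cd r"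
  have "a \<cdot> (b \<cdot> (c \<cdot> (e \<cdot> r))) = (a \<cdot> (b \<cdot> (c \<cdot> e))) \<cdot> r" using h(2-) by simp
  then show ?thesis using h(1) by (simp only:)
qed

end


context SCM begin

lemma tl_comp[simp]: "ar f \<Longrightarrow> ar g \<Longrightarrow> dm g = cd f \<Longrightarrow> (g \<cdot> f) \<otimes> idm Y = (g \<otimes> idm Y) \<cdot> (f \<otimes> idm Y)"
  using interchange[of f g "idm Y" "idm Y"] by simp
lemma tr_comp[simp]: "ar f \<Longrightarrow> ar g \<Longrightarrow> dm g = cd f \<Longrightarrow> idm Y \<otimes> (g \<cdot> f) = (idm Y \<otimes> g) \<cdot> (idm Y \<otimes> f)"
  using interchange[of "idm Y" "idm Y" f g] by simp

lemma faith_l: "ar f \<Longrightarrow> ar g \<Longrightarrow> dm f = X \<Longrightarrow> dm g = X \<Longrightarrow> cd f = Y \<Longrightarrow> cd g = Y \<Longrightarrow>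
  idm II \<otimes> f = idm II \<otimes> g \<Longrightarrow> f = g"
proof -
  assume a: "ar f" "ar g" "dm f = X" "dm g = X" "cd f = Y" "cd g = Y" and e: "idm II \<otimes> f = idm II \<otimes> g"
  have "f \<cdot> ll X = ll Y \<cdot> (idm II \<otimes> f)" using lu_nat[of f X Y] a by simp
  also have "\<dots> = g \<cdot> ll X" using lu_nat[of g X Y] a e by simp
  finally show ?thesis using iso_cancel_r[OF iso_lu] a by blast
qed
lemma faith_r: "ar f \<Longrightarrow> ar g \<Longrightarrow> dm f = X \<Longrightarrow> dm g = X \<Longrightarrow> cd f = Y \<Longrightarrow> cd g = Y \<Longrightarrow>
  f \<otimes> idm II = g \<otimes> idm II \<Longrightarrow> f = g"
proof -
  assume a: "ar f" "ar g" "dm f = X" "dm g = X" "cd f = Y" "cd g = Y" and e: "f \<otimes> idm II = g \<otimes> idm II"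
  have "f \<cdot> rr X = rr Y \<cdot> (f \<otimes> idm II)" using ru_nat[of f X Y] a by simp
  also have "\<dots> = g \<cdot> rr X" using ru_nat[of g X Y] a e by simp
  finally show ?thesis using iso_cancel_r[OF iso_ru] a by blast
qed

lemma lu_asc: "ll (X \<odot> Y) \<cdot> \<alpha> II X Y = ll X \<otimes> idm Y"
proof -
  let ?J = "\<alpha> II (II \<odot> X) Y \<cdot> (\<alpha> II II X \<otimes> idm Y)"
  have J: "iso C ?J ((((II \<odot> II) \<odot> X) \<odot> Y)) (II \<odot> ((II \<odot> X) \<odot> Y))"
    by (rule iso_comp[OF iso_tnm[OF iso_asc iso_idn] iso_asc])
  have "(idm II \<otimes> ll (X \<odot> Y)) \<cdot> (idm II \<otimes> \<alpha> II X Y) \<cdot> ?J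
      = (idm II \<otimes> ll (X \<odot> Y)) \<cdot> \<alpha> II II (X \<odot> Y) \<cdot> \<alpha> (II \<odot> II) X Y"
    using pentagon[of II II X Y] by simp
  also have "\<dots> = (rr II \<otimes> idm (X \<odot> Y)) \<cdot> \<alpha> (II \<odot> II) X Y"
    by (simp add: ctx2[OF triangle])
  also have "\<dots> = \<alpha> II X Y \<cdot> ((rr II \<otimes> idm X) \<otimes> idm Y)"
    using asc_nat[of "rr II" "idm X" "idm Y"] by simp
  also have "\<dots> = \<alpha> II X Y \<cdot> ((idm II \<otimes> ll X) \<otimes> idm Y) \<cdot> (\<alpha> II II X \<otimes> idm Y)"
    using triangle[of II X, symmetric] by simp
  also have "\<dots> = (idm II \<otimes> (ll X \<otimes> idm Y)) \<cdot> ?J"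
    using ctx2[OF asc_nat[of "idm II" "ll X" "idm Y"]] by simp
  finally have 1: "(idm II \<otimes> ll (X \<odot> Y)) \<cdot> (idm II \<otimes> \<alpha> II X Y) \<cdot> ?J = (idm II \<otimes> (ll X \<otimes> idm Y)) \<cdot> ?J" .
  have "(idm II \<otimes> ll (X \<odot> Y)) \<cdot> (idm II \<otimes> \<alpha> II X Y) = idm II \<otimes> (ll X \<otimes> idm Y)"
    using iso_cancel_r[OF J] 1 by simp
  then have "idm II \<otimes> (ll (X \<odot> Y) \<cdot> \<alpha> II X Y) = idm II \<otimes> (ll X \<otimes> idm Y)" by simp
  then show ?thesis by (rule faith_l[rotated 6]) simp_all
qed

lemma sy_inv_tl[simp]: "(\<sigma> Y X \<otimes> idm Z) \<cdot> (\<sigma> X Y \<otimes> idm Z) = idm ((X \<odot> Y) \<odot> Z)"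
  using tl_comp[of "\<sigma> X Y" "\<sigma> Y X" Z] sy_inv by simp
lemma sy_inv_tr[simp]: "(idm Z \<otimes> \<sigma> Y X) \<cdot> (idm Z \<otimes> \<sigma> X Y) = idm (Z \<odot> (X \<odot> Y))"
  using tr_comp[of "\<sigma> X Y" "\<sigma> Y X" Z] sy_inv by simp
lemma Msy_inv[simp]: "MM (\<sigma> Y X) \<cdot> MM (\<sigma> X Y) = idm (MO (X \<odot> Y))"
  using M_comp[of "\<sigma> X Y" "\<sigma> Y X"] sy_inv by simp
lemmas [simp] = sy_inv ctx2[OF sy_inv] ctx2[OF sy_inv_tl] ctx2[OF sy_inv_tr] ctx2[OF Msy_inv]
  ctx2[OF ai_asc] ctx2[OF asc_ai] ctx2[OF mu_eta1] ctx2[OF mu_eta2]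

lemma Mlaw: "a \<cdot> b = c \<cdot> d \<Longrightarrow> ar a \<Longrightarrow> ar b \<Longrightarrow> dm a = cd b \<Longrightarrow> ar c \<Longrightarrow> ar d \<Longrightarrow> dm c = cd d \<Longrightarrow>
  MM a \<cdot> MM b = MM c \<cdot> MM d"
  by (metis M_comp)

lemma sy_lu: "ll X \<cdot> \<sigma> X II = rr X"
proof -
  have "ll (II \<odot> X) \<cdot> (\<alpha> II II X \<cdot> (\<sigma> X (II \<odot> II) \<cdot> \<alpha> X II II)) =
        ll (II \<odot> X) \<cdot> ((idm II \<otimes> \<sigma> X II) \<cdot> (\<alpha> II X II \<cdot> (\<sigma> X II \<otimes> idm II)))"
    using hexagon[where X=X and Y=II and Z=II] by simp
  moreover have "ll (II \<odot> X) \<cdot> (\<alpha> II II X \<cdot> (\<sigma> X (II \<odot> II) \<cdot> \<alpha> X II II)) = 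
     (ll II \<otimes> idm X) \<cdot> (\<sigma> X (II \<odot> II) \<cdot> \<alpha> X II II)"
    by (simp add: ctx2[OF lu_asc])
  moreover have "\<dots> = \<sigma> X II \<cdot> ((idm X \<otimes> ll II) \<cdot> \<alpha> X II II)"
    using ctx2[OF sy_nat[of "idm X" "ll II", symmetric]] by simp
  moreover have "\<dots> = \<sigma> X II \<cdot> (rr X \<otimes> idm II)"
    by (simp add: triangle)
  moreover have "ll (II \<odot> X) \<cdot> ((idm II \<otimes> \<sigma> X II) \<cdot> (\<alpha> II X II \<cdot> (\<sigma> X II \<otimes> idm II))) =
     \<sigma> X II \<cdot> (ll (X \<odot> II) \<cdot> (\<alpha> II X II \<cdot> (\<sigma> X II \<otimes> idm II)))"
    using ctx2[OF lu_nat[of "\<sigma> X II"]] by simp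
  moreover have "\<dots> = \<sigma> X II \<cdot> ((ll X \<otimes> idm II) \<cdot> (\<sigma> X II \<otimes> idm II))"
    by (simp add: ctx2[OF lu_asc])
  ultimately have "\<sigma> X II \<cdot> (rr X \<otimes> idm II) = \<sigma> X II \<cdot> ((ll X \<cdot> \<sigma> X II) \<otimes> idm II)"
    by simp
  then have "rr X \<otimes> idm II = (ll X \<cdot> \<sigma> X II) \<otimes> idm II"
    by (rule iso_cancel_l[OF iso_sy, rotated 4]) simp_all
  then show ?thesis by (rule faith_r[rotated 6, symmetric]) simp_all
qed

lemma hexagon': "\<sigma> X (Y \<odot> Z) \<cdot> \<alpha> X Y Z = ai Y Z X \<cdot> ((idm Y \<otimes> \<sigma> X Z) \<cdot> (\<alpha> Y X Z \<cdot> (\<sigma> X Y \<otimes> idm Z)))"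
proof -
  have "\<sigma> X (Y \<odot> Z) \<cdot> \<alpha> X Y Z = ai Y Z X \<cdot> (\<alpha> Y Z X \<cdot> (\<sigma> X (Y \<odot> Z) \<cdot> \<alpha> X Y Z))" by simp
  also have "\<dots> = ai Y Z X \<cdot> ((idm Y \<otimes> \<sigma> X Z) \<cdot> (\<alpha> Y X Z \<cdot> (\<sigma> X Y \<otimes> idm Z)))"
    by (simp only: hexagon)
  finally show ?thesis .
qed

lemmas hexagon_c = hexagon ctx3[OF hexagon]
lemma hexagon2: "\<alpha> Y Z X \<cdot> \<sigma> X (Y \<odot> Z) = (idm Y \<otimes> \<sigma> X Z) \<cdot> (\<alpha> Y X Z \<cdot> ((\<sigma> X Y \<otimes> idm Z) \<cdot> ai X Y Z))"
proof -
  have "\<alpha> Y Z X \<cdot> \<sigma> X (Y \<odot> Z) = \<alpha> Y Z X \<cdot> (\<sigma> X (Y \<odot> Z) \<cdot> (\<alpha> X Y Z \<cdot> ai X Y Z))" by simp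
  also have "\<dots> = (idm Y \<otimes> \<sigma> X Z) \<cdot> (\<alpha> Y X Z \<cdot> ((\<sigma> X Y \<otimes> idm Z) \<cdot> ai X Y Z))"
    by (subst ctx3[OF hexagon]) simp_all
  finally show ?thesis .
qed

lemma CH1: "\<alpha> X Y Z \<cdot> ((\<sigma> Y X \<otimes> idm Z) \<cdot> ai Y X Z) = \<sigma> (Y \<odot> Z) X \<cdot> (ai Y Z X \<cdot> (idm Y \<otimes> \<sigma> X Z))"
proof -
  have J: "iso C (\<alpha> Y X Z \<cdot> (\<sigma> X Y \<otimes> idm Z)) ((X \<odot> Y) \<odot> Z) (Y \<odot> (X \<odot> Z))"
    by (rule iso_comp[OF iso_tnm[OF iso_sy iso_idn] iso_asc])
  have "(\<sigma> (Y \<odot> Z) X \<cdot> (ai Y Z X \<cdot> (idm Y \<otimes> \<sigma> X Z))) \<cdot> (\<alpha> Y X Z \<cdot> (\<sigma> X Y \<otimes> idm Z))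
     = \<sigma> (Y \<odot> Z) X \<cdot> (ai Y Z X \<cdot> (\<alpha> Y Z X \<cdot> (\<sigma> X (Y \<odot> Z) \<cdot> \<alpha> X Y Z)))"
    by (simp add: hexagon_c)
  also have "\<dots> = \<alpha> X Y Z" by simp
  also have "\<dots> = (\<alpha> X Y Z \<cdot> ((\<sigma> Y X \<otimes> idm Z) \<cdot> ai Y X Z)) \<cdot> (\<alpha> Y X Z \<cdot> (\<sigma> X Y \<otimes> idm Z))"
    by simp
  finally show ?thesis by (rule iso_cancel_r[OF J, rotated 4, symmetric]) simp_all
qed

lemma S2: "(idm X \<otimes> \<sigma> Z Y) \<cdot> (\<alpha> X Z Y \<cdot> ((\<sigma> Z X \<otimes> idm Y) \<cdot> ai Z X Y)) = \<alpha> X Y Z \<cdot> \<sigma> Z (X \<odot> Y)"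
  using hexagon2[of X Y Z] by simp

lemma S1: "\<alpha> W X Y \<cdot> ((\<sigma> X W \<otimes> idm Y) \<cdot> (ai X W Y \<cdot> ((idm X \<otimes> \<sigma> Y W) \<cdot> \<alpha> X Y W))) = \<sigma> (X \<odot> Y) W"
proof -
  have "(\<alpha> W X Y \<cdot> ((\<sigma> X W \<otimes> idm Y) \<cdot> (ai X W Y \<cdot> ((idm X \<otimes> \<sigma> Y W) \<cdot> \<alpha> X Y W)))) \<cdot> \<sigma> W (X \<odot> Y)
     = \<alpha> W X Y \<cdot> ((\<sigma> X W \<otimes> idm Y) \<cdot> (ai X W Y \<cdot> ((idm X \<otimes> \<sigma> Y W) \<cdot> (\<alpha> X Y W \<cdot> \<sigma> W (X \<odot> Y)))))"
    by simp
  also have "\<dots> = \<alpha> W X Y \<cdot> ((\<sigma> X W \<otimes> idm Y) \<cdot> (ai X W Y \<cdot> ((idm X \<otimes> \<sigma> Y W) \<cdot> 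
        ((idm X \<otimes> \<sigma> W Y) \<cdot> (\<alpha> X W Y \<cdot> ((\<sigma> W X \<otimes> idm Y) \<cdot> ai W X Y))))))"
    by (simp add: hexagon2)
  also have "\<dots> = idm (W \<odot> (X \<odot> Y))" by simp
  also have "\<dots> = \<sigma> (X \<odot> Y) W \<cdot> \<sigma> W (X \<odot> Y)" by simp
  finally show ?thesis by (rule iso_cancel_r[OF iso_sy, rotated 4]) simp_all
qed

end


context SCM begin

lemma lst_unf: "\<tau>' X Y = MM (\<sigma> Y X) \<cdot> (\<tau> Y X \<cdot> \<sigma> X (MO Y))" by (rule lst_def)

lemma eta_nat': "ar f \<Longrightarrow> dm f = X \<Longrightarrow> cd f = Y \<Longrightarrow> MM f \<cdot> \<eta> X = \<eta> Y \<cdot> f"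
  using eta_nat by simp
lemma mu_nat': "ar f \<Longrightarrow> dm f = X \<Longrightarrow> cd f = Y \<Longrightarrow> MM f \<cdot> \<mu> X = \<mu> Y \<cdot> MM (MM f)"
  using mu_nat by simp

lemma lst_nat: "ar f \<Longrightarrow> ar g \<Longrightarrow> dm f = X \<Longrightarrow> dm g = X' \<Longrightarrow> cd f = Y \<Longrightarrow> cd g = Y' \<Longrightarrow>
   \<tau>' Y Y' \<cdot> (f \<otimes> MM g) = MM (f \<otimes> g) \<cdot> \<tau>' X X'"
proof -
  assume a: "ar f" "ar g" "dm f = X" "dm g = X'" "cd f = Y" "cd g = Y'"
  have "\<tau>' Y Y' \<cdot> (f \<otimes> MM g) = MM (\<sigma> Y' Y) \<cdot> (\<tau> Y' Y \<cdot> (\<sigma> Y (MO Y') \<cdot> (f \<otimes> MM g)))"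
    using a by (simp add: lst_unf)
  also have "\<dots> = MM (\<sigma> Y' Y) \<cdot> (\<tau> Y' Y \<cdot> ((MM g \<otimes> f) \<cdot> \<sigma> X (MO X')))"
    using a by (simp add: sy_nat[of f "MM g"])
  also have "\<dots> = MM (\<sigma> Y' Y) \<cdot> (MM (g \<otimes> f) \<cdot> (\<tau> X' X \<cdot> \<sigma> X (MO X')))"
    using a by (simp add: ctx2[OF st_nat[of g f]])
  also have "\<dots> = MM (f \<otimes> g) \<cdot> (MM (\<sigma> X' X) \<cdot> (\<tau> X' X \<cdot> \<sigma> X (MO X')))"
    using a by (simp add: ctx2[OF Mlaw[OF sy_nat[of g f]]])
  also have "\<dots> = MM (f \<otimes> g) \<cdot> \<tau>' X X'" by (simp add: lst_unf)
  finally show ?thesis .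
qed

lemma lst_eta: "\<tau>' X Y \<cdot> (idm X \<otimes> \<eta> Y) = \<eta> (X \<odot> Y)"
proof -
  have "\<tau>' X Y \<cdot> (idm X \<otimes> \<eta> Y) = MM (\<sigma> Y X) \<cdot> (\<tau> Y X \<cdot> (\<sigma> X (MO Y) \<cdot> (idm X \<otimes> \<eta> Y)))"
    by (simp add: lst_unf)
  also have "\<dots> = MM (\<sigma> Y X) \<cdot> (\<tau> Y X \<cdot> ((\<eta> Y \<otimes> idm X) \<cdot> \<sigma> X Y))"
    by (simp add: sy_nat[of "idm X" "\<eta> Y"])
  also have "\<dots> = MM (\<sigma> Y X) \<cdot> (\<eta> (Y \<odot> X) \<cdot> \<sigma> X Y)"
    by (simp add: ctx2[OF st_eta])
  also have "\<dots> = \<eta> (X \<odot> Y) \<cdot> (\<sigma> Y X \<cdot> \<sigma> X Y)"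
    by (simp add: ctx2[OF eta_nat'[of "\<sigma> Y X"]])
  also have "\<dots> = \<eta> (X \<odot> Y)" by simp
  finally show ?thesis .
qed

lemma lst_mu: "\<tau>' X Y \<cdot> (idm X \<otimes> \<mu> Y) = \<mu> (X \<odot> Y) \<cdot> (MM (\<tau>' X Y) \<cdot> \<tau>' X (MO Y))"
proof -
  have "\<tau>' X Y \<cdot> (idm X \<otimes> \<mu> Y) = MM (\<sigma> Y X) \<cdot> (\<tau> Y X \<cdot> (\<sigma> X (MO Y) \<cdot> (idm X \<otimes> \<mu> Y)))"
    by (simp add: lst_unf)
  also have "\<dots> = MM (\<sigma> Y X) \<cdot> (\<tau> Y X \<cdot> ((\<mu> Y \<otimes> idm X) \<cdot> \<sigma> X (MO (MO Y))))"
    by (simp add: sy_nat[of "idm X" "\<mu> Y"])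
  also have "\<dots> = MM (\<sigma> Y X) \<cdot> (\<mu> (Y \<odot> X) \<cdot> (MM (\<tau> Y X) \<cdot> (\<tau> (MO Y) X \<cdot> \<sigma> X (MO (MO Y)))))"
    by (simp add: ctx2[OF st_mu])
  also have "\<dots> = \<mu> (X \<odot> Y) \<cdot> (MM (MM (\<sigma> Y X)) \<cdot> (MM (\<tau> Y X) \<cdot> (\<tau> (MO Y) X \<cdot> \<sigma> X (MO (MO Y)))))"
    by (simp add: ctx2[OF mu_nat'[of "\<sigma> Y X"]])
  also have "\<dots> = \<mu> (X \<odot> Y) \<cdot> (MM (\<tau>' X Y) \<cdot> \<tau>' X (MO Y))"
    by (simp add: lst_unf)
  finally show ?thesis .
qed

lemma Msy_lu: "MM (ll X) \<cdot> MM (\<sigma> X II) = MM (rr X)"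
  using M_comp[of "\<sigma> X II" "ll X"] sy_lu by simp

lemma lst_lu: "MM (ll X) \<cdot> \<tau>' II X = ll (MO X)"
proof -
  have "MM (ll X) \<cdot> \<tau>' II X = MM (ll X) \<cdot> (MM (\<sigma> X II) \<cdot> (\<tau> X II \<cdot> \<sigma> II (MO X)))"
    by (simp add: lst_unf)
  also have "\<dots> = MM (rr X) \<cdot> (\<tau> X II \<cdot> \<sigma> II (MO X))"
    by (simp add: ctx2[OF Msy_lu])
  also have "\<dots> = rr (MO X) \<cdot> \<sigma> II (MO X)"
    by (simp add: ctx2[OF st_ru])
  also have "\<dots> = ll (MO X) \<cdot> (\<sigma> (MO X) II \<cdot> \<sigma> II (MO X))"
    by (simp add: sy_lu[symmetric])
  also have "\<dots> = ll (MO X)" by simp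
  finally show ?thesis .
qed

lemma Mai_asc[simp]: "MM (ai X Y Z) \<cdot> MM (\<alpha> X Y Z) = idm (MO ((X \<odot> Y) \<odot> Z))"
  using M_comp[of "\<alpha> X Y Z" "ai X Y Z"] by simp
lemma Masc_ai[simp]: "MM (\<alpha> X Y Z) \<cdot> MM (ai X Y Z) = idm (MO (X \<odot> (Y \<odot> Z)))"
  using M_comp[of "ai X Y Z" "\<alpha> X Y Z"] by simp
lemmas [simp] = ctx2[OF Mai_asc] ctx2[OF Masc_ai]

lemma SA': "\<tau> (X \<odot> Y) Z \<cdot> (\<tau> X Y \<otimes> idm Z) = MM (ai X Y Z) \<cdot> (\<tau> X (Y \<odot> Z) \<cdot> \<alpha> (MO X) Y Z)"
proof -
  have "MM (ai X Y Z) \<cdot> (\<tau> X (Y \<odot> Z) \<cdot> \<alpha> (MO X) Y Z) = MM (ai X Y Z) \<cdot> (MM (\<alpha> X Y Z) \<cdot> (\<tau> (X \<odot> Y) Z \<cdot> (\<tau> X Y \<otimes> idm Z)))"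
    by (simp add: st_assoc)
  also have "\<dots> = \<tau> (X \<odot> Y) Z \<cdot> (\<tau> X Y \<otimes> idm Z)" by simp
  finally show ?thesis by simp
qed

lemma st_nat_idl: "ar g \<Longrightarrow> dm g = X' \<Longrightarrow> cd g = Y' \<Longrightarrow> \<tau> X Y' \<cdot> (idm (MO X) \<otimes> g) = MM (idm X \<otimes> g) \<cdot> \<tau> X X'"
  using st_nat[of "idm X" g X X' X Y'] by simp

lemma MCH1: "MM (\<alpha> X Y Z) \<cdot> (MM (\<sigma> Y X \<otimes> idm Z) \<cdot> MM (ai Y X Z)) = MM (\<sigma> (Y \<odot> Z) X) \<cdot> (MM (ai Y Z X) \<cdot> MM (idm Y \<otimes> \<sigma> X Z))"
proof -
  have "MM (\<alpha> X Y Z \<cdot> ((\<sigma> Y X \<otimes> idm Z) \<cdot> ai Y X Z)) = MM (\<sigma> (Y \<odot> Z) X \<cdot> (ai Y Z X \<cdot> (idm Y \<otimes> \<sigma> X Z)))"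
    using CH1 by simp
  then show ?thesis by simp
qed

lemma MS2: "MM (idm X \<otimes> \<sigma> Z Y) \<cdot> (MM (\<alpha> X Z Y) \<cdot> (MM (\<sigma> Z X \<otimes> idm Y) \<cdot> MM (ai Z X Y))) = MM (\<alpha> X Y Z) \<cdot> MM (\<sigma> Z (X \<odot> Y))"
proof -
  have "MM ((idm X \<otimes> \<sigma> Z Y) \<cdot> (\<alpha> X Z Y \<cdot> ((\<sigma> Z X \<otimes> idm Y) \<cdot> ai Z X Y))) = MM (\<alpha> X Y Z \<cdot> \<sigma> Z (X \<odot> Y))"
    using S2 by simp
  then show ?thesis by simp
qed

end


context SCM begin

lemma L5: "MM (\<alpha> X Y Z) \<cdot> (\<tau> (X \<odot> Y) Z \<cdot> (\<tau>' X Y \<otimes> idm Z)) = \<tau>' X (Y \<odot> Z) \<cdot> ((idm X \<otimes> \<tau> Y Z) \<cdot> \<alpha> X (MO Y) Z)"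
proof -
  let ?N = "MM (\<sigma> (Y \<odot> Z) X) \<cdot> (MM (ai Y Z X) \<cdot> (MM (idm Y \<otimes> \<sigma> X Z) \<cdot> (\<tau> Y (X \<odot> Z) \<cdot> (\<alpha> (MO Y) X Z \<cdot> (\<sigma> X (MO Y) \<otimes> idm Z)))))"
  have "MM (\<alpha> X Y Z) \<cdot> (\<tau> (X \<odot> Y) Z \<cdot> (\<tau>' X Y \<otimes> idm Z)) = 
     MM (\<alpha> X Y Z) \<cdot> (\<tau> (X \<odot> Y) Z \<cdot> ((MM (\<sigma> Y X) \<otimes> idm Z) \<cdot> ((\<tau> Y X \<otimes> idm Z) \<cdot> (\<sigma> X (MO Y) \<otimes> idm Z))))"
    by (simp add: lst_unf)
  also have "\<dots> = MM (\<alpha> X Y Z) \<cdot> (MM (\<sigma> Y X \<otimes> idm Z) \<cdot> (\<tau> (Y \<odot> X) Z \<cdot> ((\<tau> Y X \<otimes> idm Z) \<cdot> (\<sigma> X (MO Y) \<otimes> idm Z))))"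
    by (simp add: ctx2[OF st_nat[of "\<sigma> Y X" "idm Z"]])
  also have "\<dots> = MM (\<alpha> X Y Z) \<cdot> (MM (\<sigma> Y X \<otimes> idm Z) \<cdot> (MM (ai Y X Z) \<cdot> (\<tau> Y (X \<odot> Z) \<cdot> (\<alpha> (MO Y) X Z \<cdot> (\<sigma> X (MO Y) \<otimes> idm Z)))))"
    by (simp add: ctx2[OF SA'])
  also have "\<dots> = ?N"
    by (subst ctx3[OF MCH1]) simp_all
  finally have 1: "MM (\<alpha> X Y Z) \<cdot> (\<tau> (X \<odot> Y) Z \<cdot> (\<tau>' X Y \<otimes> idm Z)) = ?N" .
  have "\<tau>' X (Y \<odot> Z) \<cdot> ((idm X \<otimes> \<tau> Y Z) \<cdot> \<alpha> X (MO Y) Z) = 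
     MM (\<sigma> (Y \<odot> Z) X) \<cdot> (\<tau> (Y \<odot> Z) X \<cdot> (\<sigma> X (MO (Y \<odot> Z)) \<cdot> ((idm X \<otimes> \<tau> Y Z) \<cdot> \<alpha> X (MO Y) Z)))"
    by (simp add: lst_unf)
  also have "\<dots> = MM (\<sigma> (Y \<odot> Z) X) \<cdot> (\<tau> (Y \<odot> Z) X \<cdot> ((\<tau> Y Z \<otimes> idm X) \<cdot> (\<sigma> X (MO Y \<odot> Z) \<cdot> \<alpha> X (MO Y) Z)))"
    by (simp add: ctx2[OF sy_nat[of "idm X" "\<tau> Y Z"]])
  also have "\<dots> = MM (\<sigma> (Y \<odot> Z) X) \<cdot> (\<tau> (Y \<odot> Z) X \<cdot> ((\<tau> Y Z \<otimes> idm X) \<cdot> (ai (MO Y) Z X \<cdot> ((idm (MO Y) \<otimes> \<sigma> X Z) \<cdot> (\<alpha> (MO Y) X Z \<cdot> (\<sigma> X (MO Y) \<otimes> idm Z))))))"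
    by (simp add: hexagon')
  also have "\<dots> = MM (\<sigma> (Y \<odot> Z) X) \<cdot> (MM (ai Y Z X) \<cdot> (\<tau> Y (Z \<odot> X) \<cdot> ((idm (MO Y) \<otimes> \<sigma> X Z) \<cdot> (\<alpha> (MO Y) X Z \<cdot> (\<sigma> X (MO Y) \<otimes> idm Z)))))"
    by (subst ctx2[OF SA']) simp_all
  also have "\<dots> = ?N"
    by (simp add: ctx2[OF st_nat_idl[of "\<sigma> X Z"]])
  finally show ?thesis using 1 by simp
qed

lemma L5': "\<tau>' X (Y \<odot> Z) \<cdot> (idm X \<otimes> \<tau> Y Z) = MM (\<alpha> X Y Z) \<cdot> (\<tau> (X \<odot> Y) Z \<cdot> ((\<tau>' X Y \<otimes> idm Z) \<cdot> ai X (MO Y) Z))"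
proof -
  have "\<tau>' X (Y \<odot> Z) \<cdot> (idm X \<otimes> \<tau> Y Z) = \<tau>' X (Y \<odot> Z) \<cdot> ((idm X \<otimes> \<tau> Y Z) \<cdot> (\<alpha> X (MO Y) Z \<cdot> ai X (MO Y) Z))"
    by simp
  also have "\<dots> = MM (\<alpha> X Y Z) \<cdot> (\<tau> (X \<odot> Y) Z \<cdot> ((\<tau>' X Y \<otimes> idm Z) \<cdot> ai X (MO Y) Z))"
    by (subst ctx3[OF L5[symmetric]]) simp_all
  finally show ?thesis .
qed

lemma L4: "MM (\<alpha> X Y Z) \<cdot> \<tau>' (X \<odot> Y) Z = \<tau>' X (Y \<odot> Z) \<cdot> ((idm X \<otimes> \<tau>' Y Z) \<cdot> \<alpha> X Y (MO Z))"
proof -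
  have "\<tau>' X (Y \<odot> Z) \<cdot> ((idm X \<otimes> \<tau>' Y Z) \<cdot> \<alpha> X Y (MO Z)) =
     \<tau>' X (Y \<odot> Z) \<cdot> ((idm X \<otimes> MM (\<sigma> Z Y)) \<cdot> ((idm X \<otimes> \<tau> Z Y) \<cdot> ((idm X \<otimes> \<sigma> Y (MO Z)) \<cdot> \<alpha> X Y (MO Z))))"
    by (simp add: lst_unf[of Y Z])
  also have "\<dots> = MM (idm X \<otimes> \<sigma> Z Y) \<cdot> (\<tau>' X (Z \<odot> Y) \<cdot> ((idm X \<otimes> \<tau> Z Y) \<cdot> ((idm X \<otimes> \<sigma> Y (MO Z)) \<cdot> \<alpha> X Y (MO Z))))"
    by (subst ctx2[OF lst_nat[of "idm X" "\<sigma> Z Y" X "Z \<odot> Y" X "Y \<odot> Z"]]) simp_all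
  also have "\<dots> = MM (idm X \<otimes> \<sigma> Z Y) \<cdot> (MM (\<alpha> X Z Y) \<cdot> (\<tau> (X \<odot> Z) Y \<cdot> ((\<tau>' X Z \<otimes> idm Y) \<cdot> (ai X (MO Z) Y \<cdot>
      ((idm X \<otimes> \<sigma> Y (MO Z)) \<cdot> \<alpha> X Y (MO Z))))))"
    by (subst ctx2[OF L5']) simp_all
  also have "\<dots> = MM (idm X \<otimes> \<sigma> Z Y) \<cdot> (MM (\<alpha> X Z Y) \<cdot> (\<tau> (X \<odot> Z) Y \<cdot> ((MM (\<sigma> Z X) \<otimes> idm Y) \<cdot> ((\<tau> Z X \<otimes> idm Y) \<cdot> 
     ((\<sigma> X (MO Z) \<otimes> idm Y) \<cdot> (ai X (MO Z) Y \<cdot> ((idm X \<otimes> \<sigma> Y (MO Z)) \<cdot> \<alpha> X Y (MO Z))))))))"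
    by (simp add: lst_unf[of X Z])
  also have "\<dots> = MM (idm X \<otimes> \<sigma> Z Y) \<cdot> (MM (\<alpha> X Z Y) \<cdot> (MM (\<sigma> Z X \<otimes> idm Y) \<cdot> (\<tau> (Z \<odot> X) Y \<cdot> ((\<tau> Z X \<otimes> idm Y) \<cdot> 
     ((\<sigma> X (MO Z) \<otimes> idm Y) \<cdot> (ai X (MO Z) Y \<cdot> ((idm X \<otimes> \<sigma> Y (MO Z)) \<cdot> \<alpha> X Y (MO Z))))))))"
    by (subst ctx2[OF st_nat[of "\<sigma> Z X" "idm Y" "Z \<odot> X" Y "X \<odot> Z" Y]]) simp_all
  also have "\<dots> = MM (idm X \<otimes> \<sigma> Z Y) \<cdot> (MM (\<alpha> X Z Y) \<cdot> (MM (\<sigma> Z X \<otimes> idm Y) \<cdot> (MM (ai Z X Y) \<cdot> (\<tau> Z (X \<odot> Y) \<cdot> (\<alpha> (MO Z) X Y \<cdot>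
     ((\<sigma> X (MO Z) \<otimes> idm Y) \<cdot> (ai X (MO Z) Y \<cdot> ((idm X \<otimes> \<sigma> Y (MO Z)) \<cdot> \<alpha> X Y (MO Z)))))))))"
    by (subst ctx2[OF SA']) simp_all
  also have "\<dots> = MM (idm X \<otimes> \<sigma> Z Y) \<cdot> (MM (\<alpha> X Z Y) \<cdot> (MM (\<sigma> Z X \<otimes> idm Y) \<cdot> (MM (ai Z X Y) \<cdot> (\<tau> Z (X \<odot> Y) \<cdot> 
     \<sigma> (X \<odot> Y) (MO Z)))))"
    by (simp only: S1)
  also have "\<dots> = MM (\<alpha> X Y Z) \<cdot> (MM (\<sigma> Z (X \<odot> Y)) \<cdot> (\<tau> Z (X \<odot> Y) \<cdot> \<sigma> (X \<odot> Y) (MO Z)))"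
    by (subst ctx4[OF MS2]) simp_all
  also have "\<dots> = MM (\<alpha> X Y Z) \<cdot> \<tau>' (X \<odot> Y) Z" by (simp add: lst_unf)
  finally show ?thesis by simp
qed

end



locale SCMA = SCM C T for C :: "('o,'m) smcc" and T :: "('o,'m) smonad" +
  fixes A :: 'o
begin

abbreviation "H \<equiv> ihm C A (MO A)"
abbreviation "e \<equiv> ev C A (MO A)"
abbreviation "q \<equiv> \<mu> A \<cdot> (MM e \<cdot> \<tau> H A)"
abbreviation "aa \<equiv> curry_m C (MO H) A (MO A) q"

lemma q_ty[simp]: "ar q" "dm q = MO H \<odot> A" "cd q = MO A" by simp_all

lemma aa_ev: "e \<cdot> (aa \<otimes> idm A) = q" by simp
lemmas aa_ev_c = aa_ev ctx2[OF aa_ev]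

lemma em1: "aa \<cdot> \<eta> H = idm H"
proof (rule curry_uniq[where X = H and B = A and Z = "MO A"])
  have "e \<cdot> ((aa \<cdot> \<eta> H) \<otimes> idm A) = q \<cdot> (\<eta> H \<otimes> idm A)"
    by (simp add: aa_ev_c)
  also have "\<dots> = \<mu> A \<cdot> (MM e \<cdot> \<eta> (H \<odot> A))" by (simp add: st_eta ctx2[OF st_eta])
  also have "\<dots> = \<mu> A \<cdot> (\<eta> (MO A) \<cdot> e)" by (simp add: eta_nat')
  also have "\<dots> = e \<cdot> (idm H \<otimes> idm A)" by simp
  finally show "e \<cdot> ((aa \<cdot> \<eta> H) \<otimes> idm A) = e \<cdot> (idm H \<otimes> idm A)" .
qed simp_all

lemma em2: "aa \<cdot> MM aa = aa \<cdot> \<mu> H"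
proof (rule curry_uniq[where X = "MO (MO H)" and B = A and Z = "MO A"])
  have "e \<cdot> ((aa \<cdot> MM aa) \<otimes> idm A) = q \<cdot> (MM aa \<otimes> idm A)"
    by (simp add: aa_ev_c)
  also have "\<dots> = \<mu> A \<cdot> (MM e \<cdot> (MM (aa \<otimes> idm A) \<cdot> \<tau> (MO H) A))" 
    by (simp add: st_nat[of aa "idm A"])
  also have "\<dots> = \<mu> A \<cdot> (MM q \<cdot> \<tau> (MO H) A)" 
    by (subst ctx2[OF Mlaw[OF aa_ev[unfolded comp_assoc]]]) simp_all
  also have "\<dots> = \<mu> A \<cdot> (MM (\<mu> A) \<cdot> (MM (MM e) \<cdot> (MM (\<tau> H A) \<cdot> \<tau> (MO H) A)))" by simp
  also have "\<dots> = \<mu> A \<cdot> (\<mu> (MO A) \<cdot> (MM (MM e) \<cdot> (MM (\<tau> H A) \<cdot> \<tau> (MO H) A)))" by (simp add: ctx2[OF mu_assoc])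
  also have "\<dots> = \<mu> A \<cdot> (MM e \<cdot> (\<mu> (H \<odot> A) \<cdot> (MM (\<tau> H A) \<cdot> \<tau> (MO H) A)))" by (simp add: ctx2[OF mu_nat])
  also have "\<dots> = \<mu> A \<cdot> (MM e \<cdot> (\<tau> H A \<cdot> (\<mu> H \<otimes> idm A)))" by (simp add: st_mu)
  also have "\<dots> = e \<cdot> ((aa \<cdot> \<mu> H) \<otimes> idm A)" by (simp add: aa_ev_c)
  finally show "e \<cdot> ((aa \<cdot> MM aa) \<otimes> idm A) = e \<cdot> ((aa \<cdot> \<mu> H) \<otimes> idm A)" .
qed simp_all

abbreviation "w \<equiv> \<mu> A \<cdot> (MM e \<cdot> (\<tau>' H A \<cdot> ((idm H \<otimes> e) \<cdot> \<alpha> H H A)))"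
abbreviation "kk \<equiv> curry_m C (H \<odot> H) A (MO A) w"
abbreviation "uu \<equiv> curry_m C II A (MO A) (\<eta> A \<cdot> ll A)"

lemma kk_ev: "e \<cdot> (kk \<otimes> idm A) = w" by simp
lemmas kk_ev_c = kk_ev ctx2[OF kk_ev]
lemma uu_ev: "e \<cdot> (uu \<otimes> idm A) = \<eta> A \<cdot> ll A" by simp
lemmas uu_ev_c = uu_ev ctx2[OF uu_ev]

lemma slide: "ar f \<Longrightarrow> ar g \<Longrightarrow> dm f = X \<Longrightarrow> cd f = Y \<Longrightarrow> dm g = X' \<Longrightarrow> cd g = Y' \<Longrightarrow>
  (idm Y \<otimes> g) \<cdot> (f \<otimes> idm X') = (f \<otimes> idm Y') \<cdot> (idm X \<otimes> g)"
  using interchange[of "f" "idm Y" "idm X'" g] interchange[of "idm X" f g "idm Y'"] by simp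
lemma lst_nat_idr: "ar f \<Longrightarrow> dm f = X \<Longrightarrow> cd f = Y \<Longrightarrow> \<tau>' Y Z \<cdot> (f \<otimes> idm (MO Z)) = MM (f \<otimes> idm Z) \<cdot> \<tau>' X Z"
  using lst_nat[of f "idm Z" X Z Y Z] by simp

lemma unit_l: "kk \<cdot> (uu \<otimes> idm H) = ll H"
proof (rule curry_uniq[where X = "II \<odot> H" and B = A and Z = "MO A"])
  have "e \<cdot> ((kk \<cdot> (uu \<otimes> idm H)) \<otimes> idm A) = w \<cdot> ((uu \<otimes> idm H) \<otimes> idm A)"
    by (simp add: kk_ev_c)
  also have "\<dots> = \<mu> A \<cdot> (MM e \<cdot> (\<tau>' H A \<cdot> ((idm H \<otimes> e) \<cdot> ((uu \<otimes> idm (H \<odot> A)) \<cdot> \<alpha> II H A))))"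
    using asc_nat[of uu "idm H" "idm A"] by simp
  also have "\<dots> = \<mu> A \<cdot> (MM e \<cdot> (\<tau>' H A \<cdot> ((uu \<otimes> idm (MO A)) \<cdot> ((idm II \<otimes> e) \<cdot> \<alpha> II H A))))"
    by (simp add: ctx2[OF slide[of uu e]])
  also have "\<dots> = \<mu> A \<cdot> (MM e \<cdot> (MM (uu \<otimes> idm A) \<cdot> (\<tau>' II A \<cdot> ((idm II \<otimes> e) \<cdot> \<alpha> II H A))))"
    by (simp add: ctx2[OF lst_nat_idr[of uu]])
  also have "\<dots> = \<mu> A \<cdot> (MM (\<eta> A) \<cdot> (MM (ll A) \<cdot> (\<tau>' II A \<cdot> ((idm II \<otimes> e) \<cdot> \<alpha> II H A))))"
    by (subst ctx2[OF Mlaw[OF uu_ev[unfolded comp_assoc]]]) simp_all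
  also have "\<dots> = ll (MO A) \<cdot> ((idm II \<otimes> e) \<cdot> \<alpha> II H A)"
    by (simp add: ctx2[OF lst_lu])
  also have "\<dots> = e \<cdot> (ll (H \<odot> A) \<cdot> \<alpha> II H A)"
    by (simp add: ctx2[OF lu_nat[of e]])
  also have "\<dots> = e \<cdot> (ll H \<otimes> idm A)"
    by (simp add: lu_asc)
  finally show "e \<cdot> ((kk \<cdot> (uu \<otimes> idm H)) \<otimes> idm A) = e \<cdot> (ll H \<otimes> idm A)" .
qed simp_all

lemma unit_r: "kk \<cdot> (idm H \<otimes> uu) = rr H"
proof (rule curry_uniq[where X = "H \<odot> II" and B = A and Z = "MO A"])
  have "e \<cdot> ((kk \<cdot> (idm H \<otimes> uu)) \<otimes> idm A) = w \<cdot> ((idm H \<otimes> uu) \<otimes> idm A)"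
    by (simp add: kk_ev_c)
  also have "\<dots> = \<mu> A \<cdot> (MM e \<cdot> (\<tau>' H A \<cdot> ((idm H \<otimes> e) \<cdot> ((idm H \<otimes> (uu \<otimes> idm A)) \<cdot> \<alpha> H II A))))"
    using asc_nat[of "idm H" uu "idm A"] by simp
  also have "\<dots> = \<mu> A \<cdot> (MM e \<cdot> (\<tau>' H A \<cdot> ((idm H \<otimes> \<eta> A) \<cdot> ((idm H \<otimes> ll A) \<cdot> \<alpha> H II A))))"
  proof -
    have m: "(idm H \<otimes> e) \<cdot> (idm H \<otimes> (uu \<otimes> idm A)) = (idm H \<otimes> \<eta> A) \<cdot> (idm H \<otimes> ll A)"
      using tr_comp[of "uu \<otimes> idm A" e H, symmetric] tr_comp[of "ll A" "\<eta> A" H] uu_ev by simp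
    show ?thesis by (simp add: ctx2[OF m])
  qed
  also have "\<dots> = \<mu> A \<cdot> (MM e \<cdot> (\<eta> (H \<odot> A) \<cdot> ((idm H \<otimes> ll A) \<cdot> \<alpha> H II A)))"
    by (simp add: ctx2[OF lst_eta])
  also have "\<dots> = e \<cdot> ((idm H \<otimes> ll A) \<cdot> \<alpha> H II A)"
    by (simp add: ctx2[OF eta_nat'[of e]])
  also have "\<dots> = e \<cdot> (rr H \<otimes> idm A)"
    by (simp add: triangle)
  finally show "e \<cdot> ((kk \<cdot> (idm H \<otimes> uu)) \<otimes> idm A) = e \<cdot> (rr H \<otimes> idm A)" .
qed simp_all

lemma kassoc: "kk \<cdot> (kk \<otimes> idm H) = kk \<cdot> ((idm H \<otimes> kk) \<cdot> \<alpha> H H H)"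
proof (rule curry_uniq[where X = "(H \<odot> H) \<odot> H" and B = A and Z = "MO A"])
  let ?NL = "\<mu> A \<cdot> (MM e \<cdot> (\<tau>' H A \<cdot> ((idm H \<otimes> \<mu> A) \<cdot> ((idm H \<otimes> MM e) \<cdot> ((idm H \<otimes> \<tau>' H A) \<cdot> 
     (\<alpha> H H (MO A) \<cdot> ((idm (H \<odot> H) \<otimes> e) \<cdot> \<alpha> (H \<odot> H) H A)))))))"
  have "e \<cdot> ((kk \<cdot> (kk \<otimes> idm H)) \<otimes> idm A) = w \<cdot> ((kk \<otimes> idm H) \<otimes> idm A)"
    by (simp add: kk_ev_c)
  also have "\<dots> = \<mu> A \<cdot> (MM e \<cdot> (\<tau>' H A \<cdot> ((idm H \<otimes> e) \<cdot> ((kk \<otimes> idm (H \<odot> A)) \<cdot> \<alpha> (H \<odot> H) H A))))"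
    using asc_nat[of kk "idm H" "idm A"] by simp
  also have "\<dots> = \<mu> A \<cdot> (MM e \<cdot> (\<tau>' H A \<cdot> ((kk \<otimes> idm (MO A)) \<cdot> ((idm (H \<odot> H) \<otimes> e) \<cdot> \<alpha> (H \<odot> H) H A))))"
    by (simp add: ctx2[OF slide[of kk e]])
  also have "\<dots> = \<mu> A \<cdot> (MM e \<cdot> (MM (kk \<otimes> idm A) \<cdot> (\<tau>' (H \<odot> H) A \<cdot> ((idm (H \<odot> H) \<otimes> e) \<cdot> \<alpha> (H \<odot> H) H A))))"
    by (simp add: ctx2[OF lst_nat_idr[of kk]])
  also have "\<dots> = \<mu> A \<cdot> (MM (\<mu> A) \<cdot> (MM (MM e) \<cdot> (MM (\<tau>' H A) \<cdot> (MM (idm H \<otimes> e) \<cdot> (MM (\<alpha> H H A) \<cdot> 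
        (\<tau>' (H \<odot> H) A \<cdot> ((idm (H \<odot> H) \<otimes> e) \<cdot> \<alpha> (H \<odot> H) H A)))))))"
    by (subst ctx2[OF Mlaw[OF kk_ev[unfolded comp_assoc]]]) simp_all
  also have "\<dots> = \<mu> A \<cdot> (MM (\<mu> A) \<cdot> (MM (MM e) \<cdot> (MM (\<tau>' H A) \<cdot> (MM (idm H \<otimes> e) \<cdot> (\<tau>' H (H \<odot> A) \<cdot> ((idm H \<otimes> \<tau>' H A) \<cdot>
        (\<alpha> H H (MO A) \<cdot> ((idm (H \<odot> H) \<otimes> e) \<cdot> \<alpha> (H \<odot> H) H A))))))))"
    by (subst ctx2[OF L4[of H H A]]) simp_all
  also have "\<dots> = \<mu> A \<cdot> (MM (\<mu> A) \<cdot> (MM (MM e) \<cdot> (MM (\<tau>' H A) \<cdot> (\<tau>' H (MO A) \<cdot> ((idm H \<otimes> MM e) \<cdot> ((idm H \<otimes> \<tau>' H A) \<cdot>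
        (\<alpha> H H (MO A) \<cdot> ((idm (H \<odot> H) \<otimes> e) \<cdot> \<alpha> (H \<odot> H) H A))))))))"
    by (subst ctx2[OF lst_nat[of "idm H" e H "H \<odot> A" H "MO A", symmetric]]) simp_all
  also have "\<dots> = \<mu> A \<cdot> (\<mu> (MO A) \<cdot> (MM (MM e) \<cdot> (MM (\<tau>' H A) \<cdot> (\<tau>' H (MO A) \<cdot> ((idm H \<otimes> MM e) \<cdot> ((idm H \<otimes> \<tau>' H A) \<cdot>
        (\<alpha> H H (MO A) \<cdot> ((idm (H \<odot> H) \<otimes> e) \<cdot> \<alpha> (H \<odot> H) H A))))))))"
    by (subst ctx2[OF mu_assoc]) simp_all
  also have "\<dots> = \<mu> A \<cdot> (MM e \<cdot> (\<mu> (H \<odot> A) \<cdot> (MM (\<tau>' H A) \<cdot> (\<tau>' H (MO A) \<cdot> ((idm H \<otimes> MM e) \<cdot> ((idm H \<otimes> \<tau>' H A) \<cdot>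
        (\<alpha> H H (MO A) \<cdot> ((idm (H \<odot> H) \<otimes> e) \<cdot> \<alpha> (H \<odot> H) H A))))))))"
    by (subst ctx2[OF mu_nat[of e "H \<odot> A" "MO A"]]) simp_all
  also have "\<dots> = ?NL"
    by (subst ctx3[OF lst_mu[symmetric]]) simp_all
  finally have 1: "e \<cdot> ((kk \<cdot> (kk \<otimes> idm H)) \<otimes> idm A) = ?NL" .
  have m2: "(idm H \<otimes> e) \<cdot> (idm H \<otimes> (kk \<otimes> idm A)) = idm H \<otimes> w"
    using tr_comp[of "kk \<otimes> idm A" e H, symmetric] kk_ev by simp
  have "e \<cdot> ((kk \<cdot> ((idm H \<otimes> kk) \<cdot> \<alpha> H H H)) \<otimes> idm A) = w \<cdot> (((idm H \<otimes> kk) \<otimes> idm A) \<cdot> (\<alpha> H H H \<otimes> idm A))"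
    by (simp add: kk_ev_c)
  also have "\<dots> = \<mu> A \<cdot> (MM e \<cdot> (\<tau>' H A \<cdot> ((idm H \<otimes> e) \<cdot> ((idm H \<otimes> (kk \<otimes> idm A)) \<cdot> (\<alpha> H (H \<odot> H) A \<cdot> (\<alpha> H H H \<otimes> idm A))))))"
    by (simp add: ctx2[OF asc_nat[of "idm H" kk "idm A"]])
  also have "\<dots> = \<mu> A \<cdot> (MM e \<cdot> (\<tau>' H A \<cdot> (( idm H \<otimes> w) \<cdot> (\<alpha> H (H \<odot> H) A \<cdot> (\<alpha> H H H \<otimes> idm A)))))"
    by (subst ctx2[OF m2]) simp_all
  also have "\<dots> = \<mu> A \<cdot> (MM e \<cdot> (\<tau>' H A \<cdot> ((idm H \<otimes> \<mu> A) \<cdot> ((idm H \<otimes> MM e) \<cdot> ((idm H \<otimes> \<tau>' H A) \<cdot> 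
     ((idm H \<otimes> (idm H \<otimes> e)) \<cdot> ((idm H \<otimes> \<alpha> H H A) \<cdot> (\<alpha> H (H \<odot> H) A \<cdot> (\<alpha> H H H \<otimes> idm A)))))))))"
    by simp
  also have "\<dots> = \<mu> A \<cdot> (MM e \<cdot> (\<tau>' H A \<cdot> ((idm H \<otimes> \<mu> A) \<cdot> ((idm H \<otimes> MM e) \<cdot> ((idm H \<otimes> \<tau>' H A) \<cdot> 
     ((idm H \<otimes> (idm H \<otimes> e)) \<cdot> (\<alpha> H H (H \<odot> A) \<cdot> \<alpha> (H \<odot> H) H A)))))))"
    by (simp only: pentagon[symmetric])
  also have "\<dots> = ?NL"
    by (subst ctx2[OF asc_nat[of "idm H" "idm H" e H H "H \<odot> A" H H "MO A", symmetric]]) simp_all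
  finally show "e \<cdot> ((kk \<cdot> (kk \<otimes> idm H)) \<otimes> idm A) = e \<cdot> ((kk \<cdot> ((idm H \<otimes> kk) \<cdot> \<alpha> H H H)) \<otimes> idm A)"
    using 1 by simp
qed simp_all

lemma ML5: "MM (MM (\<alpha> X Y Z)) \<cdot> (MM (\<tau> (X \<odot> Y) Z) \<cdot> MM (\<tau>' X Y \<otimes> idm Z)) =
   MM (\<tau>' X (Y \<odot> Z)) \<cdot> (MM (idm X \<otimes> \<tau> Y Z) \<cdot> MM (\<alpha> X (MO Y) Z))"
proof -
  have "MM (MM (\<alpha> X Y Z) \<cdot> (\<tau> (X \<odot> Y) Z \<cdot> (\<tau>' X Y \<otimes> idm Z))) = MM (\<tau>' X (Y \<odot> Z) \<cdot> ((idm X \<otimes> \<tau> Y Z) \<cdot> \<alpha> X (MO Y) Z))"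
    using L5 by simp
  then show ?thesis by simp
qed

lemma MLM: "MM (\<tau>' X Y) \<cdot> MM (idm X \<otimes> \<mu> Y) = MM (\<mu> (X \<odot> Y)) \<cdot> (MM (MM (\<tau>' X Y)) \<cdot> MM (\<tau>' X (MO Y)))"
proof -
  have "MM (\<tau>' X Y \<cdot> (idm X \<otimes> \<mu> Y)) = MM (\<mu> (X \<odot> Y) \<cdot> (MM (\<tau>' X Y) \<cdot> \<tau>' X (MO Y)))"
    using lst_mu by simp
  then show ?thesis by simp
qed

lemma TS: "(idm H \<otimes> e) \<cdot> (aa \<otimes> (aa \<otimes> idm A)) = (aa \<otimes> idm (MO A)) \<cdot> (idm (MO H) \<otimes> q)"
  using interchange[of aa "idm H" "aa \<otimes> idm A" e] interchange[of "idm (MO H)" aa q "idm (MO A)"] aa_ev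
  by simp

lemma symcond: "aa \<cdot> (MM kk \<cdot> (\<mu> (H \<odot> H) \<cdot> (MM (\<tau>' H H) \<cdot> \<tau> H (MO H)))) = kk \<cdot> (aa \<otimes> aa)"
proof (rule curry_uniq[where X = "MO H \<odot> MO H" and B = A and Z = "MO A"])
  let ?T = "MM (\<tau>' H (H \<odot> A)) \<cdot> (MM (idm H \<otimes> \<tau> H A) \<cdot> (\<tau> H (MO H \<odot> A) \<cdot> \<alpha> (MO H) (MO H) A))"
  let ?N = "\<mu> A \<cdot> (MM e \<cdot> (\<mu> (H \<odot> A) \<cdot> (MM (\<tau>' H A) \<cdot> (MM (idm H \<otimes> e) \<cdot> (\<mu> (H \<odot> (H \<odot> A)) \<cdot> ?T)))))"
  have "e \<cdot> ((aa \<cdot> (MM kk \<cdot> (\<mu> (H \<odot> H) \<cdot> (MM (\<tau>' H H) \<cdot> \<tau> H (MO H))))) \<otimes> idm A) =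
     q \<cdot> ((MM kk \<otimes> idm A) \<cdot> ((\<mu> (H \<odot> H) \<otimes> idm A) \<cdot> ((MM (\<tau>' H H) \<otimes> idm A) \<cdot> (\<tau> H (MO H) \<otimes> idm A))))"
    by (simp add: aa_ev_c)
  also have "\<dots> = \<mu> A \<cdot> (MM e \<cdot> (MM (kk \<otimes> idm A) \<cdot> (\<tau> (H \<odot> H) A \<cdot> ((\<mu> (H \<odot> H) \<otimes> idm A) \<cdot> ((MM (\<tau>' H H) \<otimes> idm A) \<cdot> (\<tau> H (MO H) \<otimes> idm A))))))"
    by (simp add: ctx2[OF st_nat[of kk "idm A"]])
  also have "\<dots> = \<mu> A \<cdot> (MM (\<mu> A) \<cdot> (MM (MM e) \<cdot> (MM (\<tau>' H A) \<cdot> (MM (idm H \<otimes> e) \<cdot> (MM (\<alpha> H H A) \<cdot>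
      (\<tau> (H \<odot> H) A \<cdot> ((\<mu> (H \<odot> H) \<otimes> idm A) \<cdot> ((MM (\<tau>' H H) \<otimes> idm A) \<cdot> (\<tau> H (MO H) \<otimes> idm A)))))))))"
    by (subst ctx2[OF Mlaw[OF kk_ev[unfolded comp_assoc]]]) simp_all
  also have "\<dots> = \<mu> A \<cdot> (MM (\<mu> A) \<cdot> (MM (MM e) \<cdot> (MM (\<tau>' H A) \<cdot> (MM (idm H \<otimes> e) \<cdot> (MM (\<alpha> H H A) \<cdot>
      (\<mu> ((H \<odot> H) \<odot> A) \<cdot> (MM (\<tau> (H \<odot> H) A) \<cdot> (\<tau> (MO (H \<odot> H)) A \<cdot> ((MM (\<tau>' H H) \<otimes> idm A) \<cdot> (\<tau> H (MO H) \<otimes> idm A))))))))))"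
    by (subst ctx2[OF st_mu]) simp_all
  also have "\<dots> = \<mu> A \<cdot> (MM (\<mu> A) \<cdot> (MM (MM e) \<cdot> (MM (\<tau>' H A) \<cdot> (MM (idm H \<otimes> e) \<cdot> (\<mu> (H \<odot> (H \<odot> A)) \<cdot> (MM (MM (\<alpha> H H A)) \<cdot>
      (MM (\<tau> (H \<odot> H) A) \<cdot> (\<tau> (MO (H \<odot> H)) A \<cdot> ((MM (\<tau>' H H) \<otimes> idm A) \<cdot> (\<tau> H (MO H) \<otimes> idm A))))))))))"
    by (subst ctx2[OF mu_nat'[of "\<alpha> H H A" "(H \<odot> H) \<odot> A" "H \<odot> (H \<odot> A)"]]) simp_all
  also have "\<dots> = \<mu> A \<cdot> (MM (\<mu> A) \<cdot> (MM (MM e) \<cdot> (MM (\<tau>' H A) \<cdot> (MM (idm H \<otimes> e) \<cdot> (\<mu> (H \<odot> (H \<odot> A)) \<cdot> (MM (MM (\<alpha> H H A)) \<cdot>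
      (MM (\<tau> (H \<odot> H) A) \<cdot> (MM (\<tau>' H H \<otimes> idm A) \<cdot> (\<tau> (H \<odot> MO H) A \<cdot> (\<tau> H (MO H) \<otimes> idm A))))))))))"
    by (subst ctx2[OF st_nat[of "\<tau>' H H" "idm A" "H \<odot> MO H" A "MO (H \<odot> H)" A]]) simp_all
  also have "\<dots> = \<mu> A \<cdot> (MM (\<mu> A) \<cdot> (MM (MM e) \<cdot> (MM (\<tau>' H A) \<cdot> (MM (idm H \<otimes> e) \<cdot> (\<mu> (H \<odot> (H \<odot> A)) \<cdot> 
      (MM (\<tau>' H (H \<odot> A)) \<cdot> (MM (idm H \<otimes> \<tau> H A) \<cdot> (MM (\<alpha> H (MO H) A) \<cdot> (\<tau> (H \<odot> MO H) A \<cdot> (\<tau> H (MO H) \<otimes> idm A))))))))))"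
    by (subst ctx3[OF ML5]) simp_all
  also have "\<dots> = \<mu> A \<cdot> (MM (\<mu> A) \<cdot> (MM (MM e) \<cdot> (MM (\<tau>' H A) \<cdot> (MM (idm H \<otimes> e) \<cdot> (\<mu> (H \<odot> (H \<odot> A)) \<cdot> ?T)))))"
    by (simp only: st_assoc[symmetric])
  also have "\<dots> = \<mu> A \<cdot> (\<mu> (MO A) \<cdot> (MM (MM e) \<cdot> (MM (\<tau>' H A) \<cdot> (MM (idm H \<otimes> e) \<cdot> (\<mu> (H \<odot> (H \<odot> A)) \<cdot> ?T)))))"
    by (subst ctx2[OF mu_assoc]) simp_all
  also have "\<dots> = ?N"
    by (subst ctx2[OF mu_nat[of e "H \<odot> A" "MO A"]]) simp_all
  finally have 1: "e \<cdot> ((aa \<cdot> (MM kk \<cdot> (\<mu> (H \<odot> H) \<cdot> (MM (\<tau>' H H) \<cdot> \<tau> H (MO H))))) \<otimes> idm A) = ?N" .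

  have "e \<cdot> ((kk \<cdot> (aa \<otimes> aa)) \<otimes> idm A) = w \<cdot> ((aa \<otimes> aa) \<otimes> idm A)"
    by (simp add: kk_ev_c)
  also have "\<dots> = \<mu> A \<cdot> (MM e \<cdot> (\<tau>' H A \<cdot> ((idm H \<otimes> e) \<cdot> ((aa \<otimes> (aa \<otimes> idm A)) \<cdot> \<alpha> (MO H) (MO H) A))))"
    by (simp add: asc_nat[of aa aa "idm A"])
  also have "\<dots> = \<mu> A \<cdot> (MM e \<cdot> (\<tau>' H A \<cdot> ((aa \<otimes> idm (MO A)) \<cdot> ((idm (MO H) \<otimes> q) \<cdot> \<alpha> (MO H) (MO H) A))))"
    by (subst ctx2[OF TS]) simp_all
  also have "\<dots> = \<mu> A \<cdot> (MM e \<cdot> (MM (aa \<otimes> idm A) \<cdot> (\<tau>' (MO H) A \<cdot> ((idm (MO H) \<otimes> q) \<cdot> \<alpha> (MO H) (MO H) A))))"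
    by (subst ctx2[OF lst_nat_idr[of aa "MO H" H A]]) simp_all
  also have "\<dots> = \<mu> A \<cdot> (MM (\<mu> A) \<cdot> (MM (MM e) \<cdot> (MM (\<tau> H A) \<cdot> (\<tau>' (MO H) A \<cdot> ((idm (MO H) \<otimes> \<mu> A) \<cdot> ((idm (MO H) \<otimes> MM e) \<cdot> 
      ((idm (MO H) \<otimes> \<tau> H A) \<cdot> \<alpha> (MO H) (MO H) A)))))))"
    by (subst ctx2[OF Mlaw[OF aa_ev[unfolded comp_assoc]]]) simp_all
  also have "\<dots> = \<mu> A \<cdot> (\<mu> (MO A) \<cdot> (MM (MM e) \<cdot> (MM (\<tau> H A) \<cdot> (\<tau>' (MO H) A \<cdot> ((idm (MO H) \<otimes> \<mu> A) \<cdot> ((idm (MO H) \<otimes> MM e) \<cdot> 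
      ((idm (MO H) \<otimes> \<tau> H A) \<cdot> \<alpha> (MO H) (MO H) A)))))))"
    by (subst ctx2[OF mu_assoc]) simp_all
  also have "\<dots> = \<mu> A \<cdot> (MM e \<cdot> (\<mu> (H \<odot> A) \<cdot> (MM (\<tau> H A) \<cdot> (\<tau>' (MO H) A \<cdot> ((idm (MO H) \<otimes> \<mu> A) \<cdot> ((idm (MO H) \<otimes> MM e) \<cdot> 
      ((idm (MO H) \<otimes> \<tau> H A) \<cdot> \<alpha> (MO H) (MO H) A)))))))"
    by (subst ctx2[OF mu_nat[of e "H \<odot> A" "MO A"]]) simp_all
  also have "\<dots> = \<mu> A \<cdot> (MM e \<cdot> (\<mu> (H \<odot> A) \<cdot> (MM (\<tau>' H A) \<cdot> (\<tau> H (MO A) \<cdot> ((idm (MO H) \<otimes> \<mu> A) \<cdot> ((idm (MO H) \<otimes> MM e) \<cdot> 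
      ((idm (MO H) \<otimes> \<tau> H A) \<cdot> \<alpha> (MO H) (MO H) A)))))))"
    by (subst ctx3[OF comm[of H A]]) simp_all
  also have "\<dots> = \<mu> A \<cdot> (MM e \<cdot> (\<mu> (H \<odot> A) \<cdot> (MM (\<tau>' H A) \<cdot> (MM (idm H \<otimes> \<mu> A) \<cdot> (MM (idm H \<otimes> MM e) \<cdot> 
      (MM (idm H \<otimes> \<tau> H A) \<cdot> (\<tau> H (MO H \<odot> A) \<cdot> \<alpha> (MO H) (MO H) A)))))))"
    by (simp add: ctx2[OF st_nat_idl[of "\<mu> A"]] ctx2[OF st_nat_idl[of "MM e"]] ctx2[OF st_nat_idl[of "\<tau> H A"]])
  also have "\<dots> = \<mu> A \<cdot> (MM e \<cdot> (\<mu> (H \<odot> A) \<cdot> (MM (\<mu> (H \<odot> A)) \<cdot> (MM (MM (\<tau>' H A)) \<cdot> (MM (\<tau>' H (MO A)) \<cdot> (MM (idm H \<otimes> MM e) \<cdot> 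
      (MM (idm H \<otimes> \<tau> H A) \<cdot> (\<tau> H (MO H \<odot> A) \<cdot> \<alpha> (MO H) (MO H) A))))))))"
    by (subst ctx2[OF MLM]) simp_all
  also have "\<dots> = \<mu> A \<cdot> (MM e \<cdot> (\<mu> (H \<odot> A) \<cdot> (MM (\<mu> (H \<odot> A)) \<cdot> (MM (MM (\<tau>' H A)) \<cdot> (MM (MM (idm H \<otimes> e)) \<cdot> ?T)))))"
    by (subst ctx2[OF Mlaw[OF lst_nat[of "idm H" e H "H \<odot> A" H "MO A"]]]) simp_all
  also have "\<dots> = \<mu> A \<cdot> (MM e \<cdot> (\<mu> (H \<odot> A) \<cdot> (\<mu> (MO (H \<odot> A)) \<cdot> (MM (MM (\<tau>' H A)) \<cdot> (MM (MM (idm H \<otimes> e)) \<cdot> ?T)))))"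
    by (subst ctx2[OF mu_assoc]) simp_all
  also have "\<dots> = \<mu> A \<cdot> (MM e \<cdot> (\<mu> (H \<odot> A) \<cdot> (MM (\<tau>' H A) \<cdot> (\<mu> (H \<odot> MO A) \<cdot> (MM (MM (idm H \<otimes> e)) \<cdot> ?T)))))"
    by (subst ctx2[OF mu_nat[of "\<tau>' H A" "H \<odot> MO A" "MO (H \<odot> A)"]]) simp_all
  also have "\<dots> = ?N"
    by (subst ctx2[OF mu_nat[of "idm H \<otimes> e" "H \<odot> (H \<odot> A)" "H \<odot> MO A"]]) simp_all
  finally show "e \<cdot> ((aa \<cdot> (MM kk \<cdot> (\<mu> (H \<odot> H) \<cdot> (MM (\<tau>' H H) \<cdot> \<tau> H (MO H))))) \<otimes> idm A) = e \<cdot> ((kk \<cdot> (aa \<otimes> aa)) \<otimes> idm A)"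
    using 1 by simp
qed simp_all

end

theorem theorem21:
  fixes C :: "('o,'m) smcc" and T :: "('o,'m) smonad" and A :: 'o
  assumes "symmetric_closed_monoidal C"
    and "commutative_monad C T"
  shows "sym_em_monoid C T (ihm C A (Mo T A))
           (curry_m C (Mo T (ihm C A (Mo T A))) A (Mo T A) (qmap C T A))
           (kcomp C T A) (kident C T A)"
proof -
  interpret SCM C T by (rule SCM.intro) (rule assms)+
  interpret SCMA C T A by unfold_locales
  have t1: "aa \<in> hom C (MO H) H" "kk \<in> hom C (H \<odot> H) H" "uu \<in> hom C II H"
    by (simp_all add: hom_iff)
  show ?thesis
    unfolding sym_em_monoid_def em_algebra_def monoid_obj_def qmap_def kcomp_def kident_def Let_def
    using t1 em1 em2 kassoc unit_l unit_r symcond by blast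
qed

end
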